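(* Fix $\ell_0>0$, $h_0>0$ and a nonempty compact set $I\subset(0,h_0]$. There exist $U_0=U_0(I,\ell_0,d,t)$ and a function $\varepsilon_{\rm mag}(U,\beta;I)\ge0$ such that, for all $U\ge U_0$, all $\beta>0$ with $\beta J_0(U)\ge\ell_0$, all $L\in2\mathbb N$ and all $h\in I$, \[ \bigl|m^{\rm Hub}_{\Lambda_L,\beta,U}(h)-m^{\rm Heis}_{\Lambda_L,\beta,U}(h)\bigr|\le\varepsilon_{\rm mag}(U,\beta;I), \] and \[ \lim_{U\to\infty}\ \sup_{\beta>0:\ \beta J_0(U)\ge\ell_0}\varepsilon_{\rm mag}(U,\beta;I)=0 . \] (The estimate is uniform in $L$ and $h\in I$.)
   Context: Fix $d\ge 1$ and $t\in\mathbb R\setminus\{0\}$. For $L\in 2\mathbb N$ let $\Lambda_L=(\mathbb Z/L\mathbb Z)^d$ and $\mathscr B_{\Lambda_L}$ the set of unordered nearest-neighbour bonds of the torus, each counted once. Let $\mathcal H_{\Lambda_L}$ be the fermionic Fock space over $\ell^2(\Lambda_L)\otimes\mathbb C^2$ with CAR operators $c_{x\sigma},c^*_{x\sigma}$; $n_{x\sigma}=c^*_{x\sigma}c_{x\sigma}$, $n_x=n_{x\uparrow}+n_{x\downarrow}$, $N_{\Lambda_L}=\sum_xn_x$, $\mathcal H^{\rm hf}_{\Lambda_L}=\ker(N_{\Lambda_L}-|\Lambda_L|)$. Let $D_{\Lambda_L}=\sum_xn_{x\uparrow}n_{x\downarrow}$, $T_{\Lambda_L}=-t\sum_{\{x,y\}\in\mathscr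 B_{\Lambda_L}}\sum_\sigma(c^*_{x\sigma}c_{y\sigma}+c^*_{y\sigma}c_{x\sigma})$, $\eta_x=(-1)^{x_1+\dots+x_d}$, $S^{(3)}_x=\frac12(n_{x\uparrow}-n_{x\downarrow})$, $M_{\Lambda_L}=\sum_x\eta_xS^{(3)}_x$, and $H^{\rm Hub}_{\Lambda_L}(h)=UD_{\Lambda_L}+T_{\Lambda_L}-hM_{\Lambda_L}$ on $\mathcal H^{\rm hf}_{\Lambda_L}$ ($U>0$). The Hubbard Gibbs state is $\omega^{\rm Hub}_{\Lambda_L,\beta,U,h}(O)=\operatorname{Tr}_{\mathcal H^{\rm hf}}(Oe^{-\beta H^{\rm Hub}_{\Lambda_L}(h)})/\operatorname{Tr}_{\mathcal H^{\rm hf}}e^{-\beta H^{\rm Hub}_{\Lambda_L}(h)}$ and $m^{\rm Hub}_{\Lambda_L,\beta,U}(h)=|\Lambda_L|^{-1}\omega^{\rm Hub}_{\Lambda_L,\beta,U,h}(M_{\Lambda_L})$. Spin side: $\mathcal H^{\rm spin}_{\Lambda_L}=\bigotimes_{x}\mathbb C^2$, $S^{(a)}_x$ acts as $\frac12\sigma^{(a)}$ at $x$, $M^{\rm spin}_{\Lambda_L}=\sum_x\eta_xS^{(3)}_x$, $H^{\rm Heis}_{\Lambda_L}(J,h)=J\sum_{\{x,y\}\in\mathscr B_{\Lambda_L}}(\mathbf S_x\cdot\mathbf S_y-\frac14)-hM^{\rm spin}_{\Lambda_L}$, $J_0(U)=4t^2/U$; the Heisenberg Gibbs state $\omega^{\rm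 Heis}_{\Lambda_L,\beta,U,h}$ is the Gibbs state of $H^{\rm Heis}_{\Lambda_L}(J_0(U),h)$ on $\mathcal H^{\rm spin}_{\Lambda_L}$ and $m^{\rm Heis}_{\Lambda_L,\beta,U}(h)=|\Lambda_L|^{-1}\omega^{\rm Heis}_{\Lambda_L,\beta,U,h}(M^{\rm spin}_{\Lambda_L})$. *)

theory Defs
  imports Complex_Main "HOL-Library.Extended_Real"
begin

type_synonym 'b op = "'b \<Rightarrow> 'b \<Rightarrow> complex"  (* row index, column index *)

definition opmul :: "'b set \<Rightarrow> 'b op \<Rightarrow> 'b op \<Rightarrow> 'b op" where
  "opmul B A C = (\<lambda>i j. \<Sum>k\<in>B. A i k * C k j)"

definition opid :: "'b op" where
  "opid = (\<lambda>i j. if i = j then 1 else 0)"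

fun oppow :: "'b set \<Rightarrow> 'b op \<Rightarrow> nat \<Rightarrow> 'b op" where
  "oppow B A 0 = opid"
| "oppow B A (Suc n) = opmul B A (oppow B A n)"

definition opexp :: "'b set \<Rightarrow> 'b op \<Rightarrow> 'b op" where
  "opexp B A = (\<lambda>i j. \<Sum>n. oppow B A n i j / of_nat (fact n))"

definition optrace :: "'b set \<Rightarrow> 'b op \<Rightarrow> complex" where
  "optrace B A = (\<Sum>i\<in>B. A i i)"

definition gibbs :: "'b set \<Rightarrow> 'b op \<Rightarrow> real \<Rightarrow> 'b op \<Rightarrow> complex" where
  "gibbs B H \<beta> Obs =
     optrace B (opmul B Obs (opexp B (\<lambda>i j. - of_real \<beta> * H i j)))
     / optrace B (opexp B (\<lambda>i j. - of_real \<beta> * H i j))"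

(* sites are encoded as 0 .. L^d - 1; coordinate i is the i-th base-L digit *)
definition sites :: "nat \<Rightarrow> nat \<Rightarrow> nat set" where
  "sites L d = {0..<L ^ d}"

definition coord :: "nat \<Rightarrow> nat \<Rightarrow> nat \<Rightarrow> nat" where
  "coord L x i = (x div L ^ i) mod L"

definition eta :: "nat \<Rightarrow> nat \<Rightarrow> nat \<Rightarrow> complex" where
  "eta L d x = (-1) ^ (\<Sum>i<d. coord L x i)"

definition nbr :: "nat \<Rightarrow> nat \<Rightarrow> nat \<Rightarrow> nat \<Rightarrow> bool" where
  "nbr L d x y \<longleftrightarrow> (\<exists>i<d. coord L y i = (coord L x i + 1) mod L \<and>
                           (\<forall>j<d. j \<noteq> i \<longrightarrow> coord L y j = coord L x j))"

definition bonds :: "nat \<Rightarrow> nat \<Rightarrow> nat set set" where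
  "bonds L d = {{x, y} | x y. x \<in> sites L d \<and> y \<in> sites L d \<and> nbr L d x y}"

definition bond_pairs :: "nat set \<Rightarrow> (nat \<times> nat) set" where
  "bond_pairs b = {(x, y). x \<in> b \<and> y \<in> b \<and> x \<noteq> y}"

section \<open>Fermionic Fock space (occupation-number basis, Jordan-Wigner signs)\<close>

(* spin: True = up, False = down; mode (x,sigma) encoded as a natural number *)
definition mode :: "nat \<Rightarrow> bool \<Rightarrow> nat" where
  "mode x \<sigma> = 2 * x + (if \<sigma> then 0 else 1)"

definition fock_basis :: "nat \<Rightarrow> nat \<Rightarrow> nat set set" where
  "fock_basis L d = Pow {0..<2 * L ^ d}"

definition hf_basis :: "nat \<Rightarrow> nat \<Rightarrow> nat set set" where
  "hf_basis L d = {S \<in> fock_basis L d. card S = L ^ d}"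

definition ann :: "nat \<Rightarrow> nat set op" where
  "ann m = (\<lambda>S' S. if m \<in> S \<and> S' = S - {m} then (-1) ^ card {k \<in> S. k < m} else 0)"

definition cre :: "nat \<Rightarrow> nat set op" where
  "cre m = (\<lambda>S' S. cnj (ann m S S'))"

definition numop :: "nat \<Rightarrow> nat \<Rightarrow> nat \<Rightarrow> bool \<Rightarrow> nat set op" where
  "numop L d x \<sigma> = opmul (fock_basis L d) (cre (mode x \<sigma>)) (ann (mode x \<sigma>))"

definition Dop :: "nat \<Rightarrow> nat \<Rightarrow> nat set op" where
  "Dop L d = (\<lambda>i j. \<Sum>x\<in>sites L d.
      opmul (fock_basis L d) (numop L d x True) (numop L d x False) i j)"

definition Top :: "real \<Rightarrow> nat \<Rightarrow> nat \<Rightarrow> nat set op" where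
  "Top t L d = (\<lambda>i j. - of_real t * (\<Sum>b\<in>bonds L d. \<Sum>(x, y)\<in>bond_pairs b. \<Sum>\<sigma>\<in>(UNIV::bool set).
      opmul (fock_basis L d) (cre (mode x \<sigma>)) (ann (mode y \<sigma>)) i j))"

definition Mop :: "nat \<Rightarrow> nat \<Rightarrow> nat set op" where
  "Mop L d = (\<lambda>i j. \<Sum>x\<in>sites L d.
      eta L d x * (1/2) * (numop L d x True i j - numop L d x False i j))"

definition H_Hub :: "real \<Rightarrow> real \<Rightarrow> real \<Rightarrow> nat \<Rightarrow> nat \<Rightarrow> nat set op" where
  "H_Hub U t h L d = (\<lambda>i j. of_real U * Dop L d i j + Top t L d i j - of_real h * Mop L d i j)"

definition m_Hub :: "real \<Rightarrow> real \<Rightarrow> real \<Rightarrow> real \<Rightarrow> nat \<Rightarrow> nat \<Rightarrow> complex" where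
  "m_Hub t \<beta> U h L d = gibbs (hf_basis L d) (H_Hub U t h L d) \<beta> (Mop L d) / of_nat (L ^ d)"

section \<open>Spin-1/2 Heisenberg model (basis: set of up-spin sites)\<close>

definition spin_basis :: "nat \<Rightarrow> nat \<Rightarrow> nat set set" where
  "spin_basis L d = Pow (sites L d)"

definition S1 :: "nat \<Rightarrow> nat set op" where
  "S1 x = (\<lambda>A' A. if (x \<in> A \<and> A' = A - {x}) \<or> (x \<notin> A \<and> A' = insert x A) then 1/2 else 0)"

definition S2 :: "nat \<Rightarrow> nat set op" where
  "S2 x = (\<lambda>A' A. if x \<in> A \<and> A' = A - {x} then \<i>/2
                  else if x \<notin> A \<and> A' = insert x A then - \<i>/2 else 0)"

definition S3 :: "nat \<Rightarrow> nat set op" where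
  "S3 x = (\<lambda>A' A. if A' = A then (if x \<in> A then 1/2 else - 1/2) else 0)"

definition SdotS :: "nat \<Rightarrow> nat \<Rightarrow> nat \<Rightarrow> nat \<Rightarrow> nat set op" where
  "SdotS L d x y = (\<lambda>i j. opmul (spin_basis L d) (S1 x) (S1 y) i j
                        + opmul (spin_basis L d) (S2 x) (S2 y) i j
                        + opmul (spin_basis L d) (S3 x) (S3 y) i j)"

definition Mspin :: "nat \<Rightarrow> nat \<Rightarrow> nat set op" where
  "Mspin L d = (\<lambda>i j. \<Sum>x\<in>sites L d. eta L d x * S3 x i j)"

(* each bond b = {x,y} contributes S_x.S_y - 1/4; the ordered-pair sum counts it twice, hence 1/2 *)
definition H_Heis :: "real \<Rightarrow> real \<Rightarrow> nat \<Rightarrow> nat \<Rightarrow> nat set op" where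
  "H_Heis J h L d = (\<lambda>i j. of_real J * (\<Sum>b\<in>bonds L d. (1/2) * (\<Sum>(x, y)\<in>bond_pairs b.
        SdotS L d x y i j - (1/4) * opid i j)) - of_real h * Mspin L d i j)"

definition J0 :: "real \<Rightarrow> real \<Rightarrow> real" where
  "J0 t U = 4 * t\<^sup>2 / U"

definition m_Heis :: "real \<Rightarrow> real \<Rightarrow> real \<Rightarrow> real \<Rightarrow> nat \<Rightarrow> nat \<Rightarrow> complex" where
  "m_Heis t \<beta> U h L d = gibbs (spin_basis L d) (H_Heis (J0 t U) h L d) \<beta> (Mspin L d) / of_nat (L ^ d)"

end

theory Submission
  imports Defs "Jordan_Normal_Form.Schur_Decomposition" "HOL-Real_Asymp.Real_Asymp"
begin

definition adjm :: "complex mat \<Rightarrow> complex mat" where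
  "adjm A = mat (dim_col A) (dim_row A) (\<lambda>(i,j). cnj (A $$ (j,i)))"

definition diagm :: "nat \<Rightarrow> (nat \<Rightarrow> real) \<Rightarrow> complex mat" where
  "diagm n d = mat n n (\<lambda>(i,j). if i = j then complex_of_real (d i) else 0)"

lemma adjm_carrier[simp]: "A \<in> carrier_mat n m \<Longrightarrow> adjm A \<in> carrier_mat m n"
  by (auto simp: adjm_def)

lemma adjm_dim[simp]: "dim_row (adjm A) = dim_col A" "dim_col (adjm A) = dim_row A"
  by (auto simp: adjm_def)

lemma adjm_index[simp]: "i < dim_col A \<Longrightarrow> j < dim_row A \<Longrightarrow> adjm A $$ (i,j) = cnj (A $$ (j,i))"
  by (auto simp: adjm_def)

lemma mult_entry:
  assumes "A \<in> carrier_mat n m" "B \<in> carrier_mat m p" "i < n" "j < p"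
  shows "(A * B) $$ (i,j) = (\<Sum>k<m. A $$ (i,k) * B $$ (k,j))"
  using assms by (auto simp: scalar_prod_def atLeast0LessThan intro!: sum.cong)

lemma adjm_mult:
  assumes "A \<in> carrier_mat n m" "B \<in> carrier_mat m p"
  shows "adjm (A * B) = adjm B * adjm A"
proof (rule eq_matI)
  fix i j assume ij: "i < dim_row (adjm B * adjm A)" "j < dim_col (adjm B * adjm A)"
  hence i: "i < p" and j: "j < n" using assms by auto
  have "adjm (A * B) $$ (i,j) = cnj ((A*B) $$ (j,i))" using assms i j by auto
  also have "\<dots> = (\<Sum>k<m. cnj (A $$ (j,k)) * cnj (B $$ (k,i)))"
    using assms i j by (subst mult_entry[OF assms(1,2)], auto simp: cnj_sum)
  also have "\<dots> = (adjm B * adjm A) $$ (i,j)"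
    using assms i j by (subst mult_entry[of _ p m _ n], auto simp: mult.commute intro!: sum.cong)
  finally show "adjm (A * B) $$ (i,j) = (adjm B * adjm A) $$ (i,j)" .
qed (use assms in auto)

lemma adjm_adjm[simp]: "adjm (adjm A) = A"
  by (rule eq_matI, auto simp: adjm_def)

lemma unitary_right:
  assumes "W \<in> carrier_mat n n" "adjm W * W = 1\<^sub>m n"
  shows "W * adjm W = 1\<^sub>m n"
  using mat_mult_left_right_inverse[of "adjm W" n W] assms by auto

lemma cdot_self:
  assumes "w \<in> carrier_vec n"
  shows "w \<bullet>c w = complex_of_real (\<Sum>k<n. (cmod (w $ k))^2)"
proof -
  have "w \<bullet>c w = (\<Sum>k<n. w $ k * cnj (w $ k))"
    using assms by (auto simp: scalar_prod_def atLeast0LessThan)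
  also have "\<dots> = (\<Sum>k<n. complex_of_real ((cmod (w $ k))^2))"
    by (intro sum.cong refl, metis complex_norm_square of_real_power)
  finally show ?thesis by simp
qed

lemma unitary_completion:
  assumes v: "v \<in> carrier_vec n" and v0: "v \<noteq> 0\<^sub>v n"
  shows "\<exists>W. W \<in> carrier_mat n n \<and> adjm W * W = 1\<^sub>m n \<and> (\<exists>c. c \<noteq> 0 \<and> col W 0 = c \<cdot>\<^sub>v v)"
proof -
  interpret cof_vec_space n "TYPE(complex)" .
  define b where "b = basis_completion v"
  from basis_completion[OF v v0, folded b_def]
  have dist_b: "distinct b" and indep: "\<not> lin_dep (set b)" and bc: "set b \<subseteq> carrier_vec n"
    and hdb: "hd b = v" and len_b: "length b = n" by auto
  have n: "n \<noteq> 0"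
  proof
    assume "n = 0"
    with v have "v = 0\<^sub>v n" by (intro eq_vecI, auto)
    with v0 show False by simp
  qed
  define ws where "ws = gram_schmidt n b"
  have wsc: "set ws \<subseteq> carrier_vec n" 
    using gram_schmidt_result(3)[OF bc dist_b indep refl, folded ws_def] .
  have orth: "corthogonal ws"
    using gram_schmidt_result(2)[OF bc dist_b indep refl, folded ws_def] .
  have lenws: "length ws = n"
    using gram_schmidt_result(4)[OF bc dist_b indep refl, folded ws_def] len_b by simp
  from hdb len_b n obtain vs where bv: "b = v # vs" by (cases b, auto)
  have hdws: "hd ws = v" unfolding ws_def bv using v by simp
  have ws0: "ws ! 0 = v" using hdws lenws n by (cases ws, auto)
  define nr where "nr j = sqrt (\<Sum>k<n. (cmod (ws ! j $ k))^2)" for j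
  have wsj: "j < n \<Longrightarrow> ws ! j \<in> carrier_vec n" for j using wsc lenws by auto
  have dot: "i < n \<Longrightarrow> j < n \<Longrightarrow> ws ! j \<bullet>c ws ! i = (\<Sum>k<n. cnj (ws ! i $ k) * ws ! j $ k)" for i j
    using wsj by (auto simp: scalar_prod_def atLeast0LessThan mult.commute intro!: sum.cong)
  have nrpos: "j < n \<Longrightarrow> nr j > 0" for j
  proof -
    assume j: "j < n"
    have "ws ! j \<bullet>c ws ! j \<noteq> 0" using orth j lenws by (auto simp: corthogonal_def)
    hence "(\<Sum>k<n. (cmod (ws ! j $ k))^2) \<noteq> 0" using cdot_self[OF wsj[OF j]] by (metis of_real_0)
    moreover have "(\<Sum>k<n. (cmod (ws ! j $ k))^2) \<ge> 0" by (intro sum_nonneg, auto)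
    ultimately show ?thesis unfolding nr_def by auto
  qed
  have nrsq: "j < n \<Longrightarrow> ws ! j \<bullet>c ws ! j = complex_of_real (nr j * nr j)" for j
    using cdot_self[OF wsj] unfolding nr_def by (simp add: sum_nonneg)
  define W where "W = mat n n (\<lambda>(i,j). ws ! j $ i / complex_of_real (nr j))"
  have W: "W \<in> carrier_mat n n" unfolding W_def by auto
  have "adjm W * W = 1\<^sub>m n"
  proof (rule eq_matI)
    fix i j assume "i < dim_row (1\<^sub>m n :: complex mat)" "j < dim_col (1\<^sub>m n :: complex mat)"
    hence i: "i < n" and j: "j < n" by auto
    have "(adjm W * W) $$ (i,j) = (\<Sum>k<n. cnj (ws ! i $ k / complex_of_real (nr i)) * (ws ! j $ k / complex_of_real (nr j)))"
      using W i j by (subst mult_entry[of _ n n _ n], auto simp: W_def intro!: sum.cong)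
    also have "\<dots> = (\<Sum>k<n. cnj (ws ! i $ k) * ws ! j $ k) / (complex_of_real (nr i) * complex_of_real (nr j))"
      by (simp add: sum_divide_distrib)
    also have "\<dots> = (ws ! j \<bullet>c ws ! i) / (complex_of_real (nr i) * complex_of_real (nr j))"
      using dot i j by simp
    also have "\<dots> = 1\<^sub>m n $$ (i,j)"
    proof (cases "i = j")
      case True
      thus ?thesis using nrsq[OF i] nrpos[OF i] i by simp
    next
      case False
      hence "ws ! j \<bullet>c ws ! i = 0" using orth i j lenws by (auto simp: corthogonal_def)
      thus ?thesis using False i j by simp
    qed
    finally show "(adjm W * W) $$ (i,j) = 1\<^sub>m n $$ (i,j)" .
  qed (use W in auto)
  moreover have "col W 0 = (1 / complex_of_real (nr 0)) \<cdot>\<^sub>v v"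
    using n v ws0 W by (intro eq_vecI, auto simp: W_def)
  moreover have "1 / complex_of_real (nr 0) \<noteq> 0" using nrpos[of 0] n by auto
  ultimately show ?thesis using W by blast
qed


lemma mult_diagm:
  assumes X: "X \<in> carrier_mat k n" and i: "i < k" and j: "j < n"
  shows "(X * diagm n d) $$ (i,j) = X $$ (i,j) * complex_of_real (d j)"
proof -
  have "(X * diagm n d) $$ (i,j) = (\<Sum>l<n. X $$ (i,l) * diagm n d $$ (l,j))"
    using X i j by (subst mult_entry[of _ k n _ n], auto simp: diagm_def)
  also have "\<dots> = (\<Sum>l<n. if l = j then X $$ (i,l) * complex_of_real (d l) else 0)"
    using j by (intro sum.cong refl, auto simp: diagm_def)
  also have "\<dots> = X $$ (i,j) * complex_of_real (d j)" using j by simp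
  finally show ?thesis .
qed

lemma diagm_carrier[simp]: "diagm n d \<in> carrier_mat n n"
  by (simp add: diagm_def)

lemma spectral_jnf:
  "A \<in> carrier_mat n n \<Longrightarrow> adjm A = A \<Longrightarrow>
   \<exists>U d. U \<in> carrier_mat n n \<and> adjm U * U = 1\<^sub>m n \<and> A * U = U * diagm n d"
proof (induction n arbitrary: A)
  case 0
  show ?case
    by (intro exI[of _ "1\<^sub>m 0"] exI[of _ "\<lambda>_. 0"], insert 0, auto intro!: eq_matI simp: diagm_def adjm_def)
next
  case (Suc m A)
  define n where "n = Suc m"
  have A: "A \<in> carrier_mat n n" using Suc.prems n_def by simp
  have Aadj: "adjm A = A" using Suc.prems by simp
  obtain as where cp: "char_poly A = (\<Prod>a\<leftarrow>as. [:- a, 1:])" and las: "length as = n"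
    using char_poly_factorized[OF A] by blast
  then obtain e rest where as: "as = e # rest" unfolding n_def by (cases as, auto)
  have "poly (char_poly A) e = 0" unfolding cp as by simp
  hence "eigenvalue A e" using eigenvalue_root_char_poly[OF A] by simp
  hence "eigenvector A (find_eigenvector A e) e" using find_eigenvector[OF A] by simp
  then obtain v where v: "v \<in> carrier_vec n" and v0: "v \<noteq> 0\<^sub>v n" and Av: "A *\<^sub>v v = e \<cdot>\<^sub>v v"
    using A unfolding eigenvector_def by auto
  obtain W c where W: "W \<in> carrier_mat n n" and WW: "adjm W * W = 1\<^sub>m n" and c: "col W 0 = c \<cdot>\<^sub>v v"
    using unitary_completion[OF v v0] by blast
  have WW': "W * adjm W = 1\<^sub>m n" using unitary_right[OF W WW] .
  have aW: "adjm W \<in> carrier_mat n n" using W by simp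
  have n0: "0 < n" unfolding n_def by simp
  define A' where "A' = adjm W * A * W"
  have A': "A' \<in> carrier_mat n n" unfolding A'_def using W A by auto
  have AW0: "(A * W) $$ (k,0) = e * W $$ (k,0)" if k: "k < n" for k
  proof -
    have "(A * W) $$ (k,0) = (A *\<^sub>v col W 0) $ k" using A W k n0 by simp
    also have "\<dots> = (c \<cdot>\<^sub>v (e \<cdot>\<^sub>v v)) $ k" unfolding c using mult_mat_vec[OF A v] Av by simp
    also have "\<dots> = e * (col W 0 $ k)" unfolding c using v k by simp
    also have "\<dots> = e * W $$ (k,0)" using W k n0 by simp
    finally show ?thesis .
  qed
  have A'col: "A' $$ (i,0) = (if i = 0 then e else 0)" if i: "i < n" for i
  proof -
    have "A' = adjm W * (A * W)" unfolding A'_def using W A aW by (simp add: assoc_mult_mat[of _ n n])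
    hence "A' $$ (i,0) = (\<Sum>k<n. adjm W $$ (i,k) * (A * W) $$ (k,0))"
      using mult_entry[OF adjm_carrier[OF W] mult_carrier_mat[OF A W] i n0] by simp
    also have "\<dots> = e * (\<Sum>k<n. adjm W $$ (i,k) * W $$ (k,0))"
      by (simp add: AW0 sum_distrib_left mult.left_commute)
    also have "(\<Sum>k<n. adjm W $$ (i,k) * W $$ (k,0)) = (adjm W * W) $$ (i,0)"
      using W i n0 by (subst mult_entry[of _ n n _ n], auto)
    finally show ?thesis using WW i n0 by simp
  qed
  have A'adj: "adjm A' = A'"
  proof -
    have "adjm A' = adjm W * adjm (adjm W * A)"
      unfolding A'_def by (rule adjm_mult[OF mult_carrier_mat[OF adjm_carrier[OF W] A] W])
    also have "\<dots> = adjm W * (A * W)"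
      using adjm_mult[OF adjm_carrier[OF W] A] Aadj by simp
    also have "\<dots> = A'" unfolding A'_def using W A aW by (simp add: assoc_mult_mat[of _ n n])
    finally show ?thesis .
  qed
  have A'row: "A' $$ (0,j) = (if j = 0 then cnj e else 0)" if j: "j < n" for j
  proof -
    have "A' $$ (0,j) = adjm A' $$ (0,j)" using A'adj by simp
    also have "\<dots> = cnj (A' $$ (j,0))" using A' j n0 by simp
    finally show ?thesis using A'col[OF j] by simp
  qed
  have ereal: "e = complex_of_real (Re e)"
  proof -
    have "e = cnj e" using A'row[OF n0] A'col[OF n0] by simp
    thus ?thesis by (metis Reals_cnj_iff Re_complex_of_real Reals_cases)
  qed
  define A3 where "A3 = mat m m (\<lambda>(i,j). A' $$ (Suc i, Suc j))"
  have A3: "A3 \<in> carrier_mat m m" unfolding A3_def by simp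
  have A3adj: "adjm A3 = A3"
  proof (rule eq_matI)
    fix i j assume "i < dim_row A3" "j < dim_col A3"
    hence i: "i < m" and j: "j < m" using A3 by auto
    have "adjm A3 $$ (i,j) = cnj (A' $$ (Suc j, Suc i))" using i j by (simp add: A3_def)
    also have "\<dots> = adjm A' $$ (Suc i, Suc j)" using A' i j n_def by simp
    also have "\<dots> = A3 $$ (i,j)" using A'adj i j by (simp add: A3_def)
    finally show "adjm A3 $$ (i,j) = A3 $$ (i,j)" .
  qed (use A3 in auto)
  obtain U3 d3 where U3: "U3 \<in> carrier_mat m m" and U3U3: "adjm U3 * U3 = 1\<^sub>m m"
    and A3U3: "A3 * U3 = U3 * diagm m d3"
    using Suc.IH[OF A3 A3adj] by blast
  define V where "V = mat n n (\<lambda>(i,j). if i = 0 then (if j = 0 then 1 else 0)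
                        else if j = 0 then 0 else U3 $$ (i - 1, j - 1))"
  define d where "d = (\<lambda>i. if i = 0 then Re e else d3 (i - 1))"
  have V: "V \<in> carrier_mat n n" unfolding V_def by simp
  have VV: "adjm V * V = 1\<^sub>m n"
  proof (rule eq_matI)
    fix i j assume "i < dim_row (1\<^sub>m n :: complex mat)" "j < dim_col (1\<^sub>m n :: complex mat)"
    hence i: "i < n" and j: "j < n" by auto
    have "(adjm V * V) $$ (i,j) = (\<Sum>k<n. cnj (V $$ (k,i)) * V $$ (k,j))"
      using V i j by (subst mult_entry[of _ n n _ n], auto intro!: sum.cong)
    also have "\<dots> = cnj (V $$ (0,i)) * V $$ (0,j) + (\<Sum>k<m. cnj (V $$ (Suc k,i)) * V $$ (Suc k,j))"
      unfolding n_def by (rule sum.lessThan_Suc_shift)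
    also have "\<dots> = 1\<^sub>m n $$ (i,j)"
    proof (cases i)
      case 0
      thus ?thesis using i j by (cases j, auto simp: V_def n_def)
    next
      case (Suc a)
      show ?thesis
      proof (cases j)
        case 0
        thus ?thesis using i j Suc by (auto simp: V_def n_def)
      next
        case (Suc b)
        have a: "a < m" and b: "b < m" using i j `i = Suc a` Suc n_def by auto
        have "(\<Sum>k<m. cnj (V $$ (Suc k,i)) * V $$ (Suc k,j)) = (adjm U3 * U3) $$ (a,b)"
          using U3 a b `i = Suc a` Suc by (subst mult_entry[of _ m m _ m], auto simp: V_def n_def intro!: sum.cong)
        thus ?thesis using U3U3 a b `i = Suc a` Suc by (simp add: V_def n_def)
      qed
    qed
    finally show "(adjm V * V) $$ (i,j) = 1\<^sub>m n $$ (i,j)" .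
  qed (use V in auto)
  define U where "U = W * V"
  have U: "U \<in> carrier_mat n n" unfolding U_def using W V by simp
  have UU: "adjm U * U = 1\<^sub>m n"
  proof -
    have "adjm U * U = adjm V * adjm W * (W * V)" unfolding U_def using adjm_mult[OF W V] by simp
    also have "\<dots> = adjm V * (adjm W * (W * V))"
      by (rule assoc_mult_mat[OF adjm_carrier[OF V] adjm_carrier[OF W] mult_carrier_mat[OF W V]])
    also have "adjm W * (W * V) = (adjm W * W) * V"
      by (rule assoc_mult_mat[OF adjm_carrier[OF W] W V, symmetric])
    also have "\<dots> = V" using WW V by simp
    also have "adjm V * V = 1\<^sub>m n" by (rule VV)
    finally show ?thesis .
  qed
  have A'V: "A' * V = V * diagm n d"
  proof (rule eq_matI)
    fix i j assume "i < dim_row (V * diagm n d)" "j < dim_col (V * diagm n d)"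
    hence i: "i < n" and j: "j < n" using V by (auto simp: diagm_def)
    have "(A' * V) $$ (i,j) = (\<Sum>k<n. A' $$ (i,k) * V $$ (k,j))"
      using A' V i j by (subst mult_entry[of _ n n _ n], auto)
    also have "\<dots> = A' $$ (i,0) * V $$ (0,j) + (\<Sum>k<m. A' $$ (i,Suc k) * V $$ (Suc k,j))"
      unfolding n_def by (rule sum.lessThan_Suc_shift)
    also have "\<dots> = V $$ (i,j) * complex_of_real (d j)"
    proof (cases i)
      case 0
      have "(\<Sum>k<m. A' $$ (i,Suc k) * V $$ (Suc k,j)) = 0"
        using 0 A'row n_def by (intro sum.neutral, auto)
      thus ?thesis using 0 A'col[OF n0] i j ereal by (cases j, auto simp: V_def d_def n_def)
    next
      case (Suc a)
      have a: "a < m" using i Suc n_def by auto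
      have z: "A' $$ (i,0) = 0" using A'col[OF i] Suc by simp
      show ?thesis
      proof (cases j)
        case 0
        thus ?thesis using z i j Suc by (auto simp: V_def n_def)
      next
        case (Suc b)
        have b: "b < m" using j Suc n_def by auto
        have "(\<Sum>k<m. A' $$ (i,Suc k) * V $$ (Suc k,j)) = (A3 * U3) $$ (a,b)"
          using U3 A3 a b `i = Suc a` Suc by (subst mult_entry[of _ m m _ m], auto simp: V_def A3_def n_def intro!: sum.cong)
        also have "\<dots> = U3 $$ (a,b) * complex_of_real (d3 b)"
          unfolding A3U3 using U3 a b by (simp add: mult_diagm)
        finally show ?thesis using z a b `i = Suc a` Suc by (simp add: V_def d_def n_def)
      qed
    qed
    also have "\<dots> = (V * diagm n d) $$ (i,j)" using V i j by (simp add: mult_diagm)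
    finally show "(A' * V) $$ (i,j) = (V * diagm n d) $$ (i,j)" .
  qed (use A' V in \<open>auto simp: diagm_def\<close>)
  have A'eq: "A' = adjm W * (A * W)" unfolding A'_def by (rule assoc_mult_mat[OF aW A W])
  have WA': "W * A' = A * W"
  proof -
    have "W * A' = W * (adjm W * (A * W))" using A'eq by simp
    also have "\<dots> = (W * adjm W) * (A * W)" by (rule assoc_mult_mat[OF W aW mult_carrier_mat[OF A W], symmetric])
    also have "\<dots> = A * W" using WW' A W by simp
    finally show ?thesis .
  qed
  have "A * U = U * diagm n d"
  proof -
    have "A * U = (A * W) * V" unfolding U_def by (rule assoc_mult_mat[OF A W V, symmetric])
    also have "\<dots> = (W * A') * V" using WA' by simp
    also have "\<dots> = W * (A' * V)" by (rule assoc_mult_mat[OF W A' V])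
    also have "\<dots> = W * (V * diagm n d)" using A'V by simp
    also have "\<dots> = U * diagm n d" unfolding U_def by (rule assoc_mult_mat[OF W V diagm_carrier, symmetric])
    finally show ?thesis .
  qed
  thus ?case using U UU n_def by blast
qed

lemma spectral_fun:
  assumes fin: "finite B" and herm: "\<forall>i\<in>B. \<forall>j\<in>B. H i j = cnj (H j i)"
  shows "\<exists>u lam. (\<forall>k<card B. \<forall>l<card B. (\<Sum>i\<in>B. cnj (u k i) * u l i) = (if k = l then 1 else 0))
        \<and> (\<forall>i\<in>B. \<forall>j\<in>B. (\<Sum>k<card B. u k i * cnj (u k j)) = (if i = j then 1 else 0))
        \<and> (\<forall>k<card B. \<forall>i\<in>B. (\<Sum>j\<in>B. H i j * u k j) = complex_of_real (lam k) * u k i)"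
proof -
  define n where "n = card B"
  obtain e where e: "bij_betw e {0..<n} B" using ex_bij_betw_nat_finite[OF fin] n_def by blast
  define f where "f = the_inv_into {0..<n} e"
  have fB: "i \<in> B \<Longrightarrow> f i < n" for i
    using bij_betw_apply[OF bij_betw_the_inv_into[OF e]] unfolding f_def by auto
  have ef: "i \<in> B \<Longrightarrow> e (f i) = i" for i
    using e unfolding f_def by (simp add: f_the_inv_into_f_bij_betw)
  have fe: "a < n \<Longrightarrow> f (e a) = a" for a
    using e unfolding f_def by (simp add: bij_betw_def the_inv_into_f_f)
  have eB: "a < n \<Longrightarrow> e a \<in> B" for a using e by (auto simp: bij_betw_def)
  have reidx: "(\<Sum>i\<in>B. g i) = (\<Sum>a<n. g (e a))" for g :: "_ \<Rightarrow> complex"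
    using sum.reindex_bij_betw[OF e, of g] by (simp add: atLeast0LessThan)
  define Hm where "Hm = mat n n (\<lambda>(a,b). H (e a) (e b))"
  have Hm: "Hm \<in> carrier_mat n n" unfolding Hm_def by simp
  have Hadj: "adjm Hm = Hm"
  proof (rule eq_matI)
    fix a b assume "a < dim_row Hm" "b < dim_col Hm"
    hence a: "a < n" and b: "b < n" using Hm by auto
    have "H (e a) (e b) = cnj (H (e b) (e a))" using herm eB[OF a] eB[OF b] by blast
    thus "adjm Hm $$ (a,b) = Hm $$ (a,b)" using a b by (simp add: Hm_def adjm_def)
  qed (auto simp: Hm_def adjm_def)
  obtain U d where U: "U \<in> carrier_mat n n" and UU: "adjm U * U = 1\<^sub>m n" and HU: "Hm * U = U * diagm n d"
    using spectral_jnf[OF Hm Hadj] by blast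
  have UU': "U * adjm U = 1\<^sub>m n" using unitary_right[OF U UU] .
  define u where "u k i = U $$ (f i, k)" for k i
  have 1: "(\<Sum>i\<in>B. cnj (u k i) * u l i) = (if k = l then 1 else 0)" if k: "k < n" and l: "l < n" for k l
  proof -
    have "(\<Sum>i\<in>B. cnj (u k i) * u l i) = (\<Sum>a<n. cnj (U $$ (a,k)) * U $$ (a,l))"
      unfolding reidx u_def using fe by simp
    also have "\<dots> = (adjm U * U) $$ (k,l)"
      using U k l by (subst mult_entry[of _ n n _ n], auto intro!: sum.cong)
    finally show ?thesis using UU k l by simp
  qed
  have 2: "(\<Sum>k<n. u k i * cnj (u k j)) = (if i = j then 1 else 0)" if i: "i \<in> B" and j: "j \<in> B" for i j
  proof -
    have "(\<Sum>k<n. u k i * cnj (u k j)) = (U * adjm U) $$ (f i, f j)"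
      using U fB[OF i] fB[OF j] unfolding u_def by (subst mult_entry[of _ n n _ n], auto intro!: sum.cong)
    also have "\<dots> = (if f i = f j then 1 else 0)" using UU' fB[OF i] fB[OF j] by simp
    also have "(f i = f j) = (i = j)" using ef i j by (metis ef[OF i] ef[OF j])
    finally show ?thesis .
  qed
  have 3: "(\<Sum>j\<in>B. H i j * u k j) = complex_of_real (d k) * u k i" if k: "k < n" and i: "i \<in> B" for k i
  proof -
    have "(\<Sum>j\<in>B. H i j * u k j) = (\<Sum>b<n. Hm $$ (f i, b) * U $$ (b, k))"
      unfolding reidx u_def using fe fB[OF i] ef[OF i] by (intro sum.cong refl, simp add: Hm_def fe ef[OF i] fB[OF i])
    also have "\<dots> = (Hm * U) $$ (f i, k)"
      using U Hm fB[OF i] k by (subst mult_entry[of _ n n _ n], auto)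
    also have "\<dots> = U $$ (f i, k) * complex_of_real (d k)"
      unfolding HU using U fB[OF i] k by (simp add: mult_diagm)
    finally show ?thesis unfolding u_def by (simp add: mult.commute)
  qed
  show ?thesis using 1 2 3 by (intro exI[of _ u] exI[of _ d], unfold n_def[symmetric], blast)
qed


definition RQ :: "'b set \<Rightarrow> 'b op \<Rightarrow> ('b \<Rightarrow> complex) \<Rightarrow> complex" where
  "RQ B A v = (\<Sum>i\<in>B. \<Sum>j\<in>B. cnj (v i) * A i j * v j)"

definition nrm :: "'b set \<Rightarrow> ('b \<Rightarrow> complex) \<Rightarrow> real" where
  "nrm B v = (\<Sum>i\<in>B. (cmod (v i))^2)"

lemma cnj_mult_self: "cnj z * z = complex_of_real ((cmod z)^2)"
  by (metis complex_norm_square mult.commute of_real_power)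

lemma exp_sums_c: "(\<lambda>n. (z::complex)^n / of_nat (fact n)) sums exp z"
proof -
  have "(\<lambda>n. z^n /\<^sub>R fact n) = (\<lambda>n. z^n / of_nat (fact n))"
    by (rule ext, simp add: scaleR_conv_of_real divide_inverse mult.commute)
  thus ?thesis using exp_converges[of z] by simp
qed

lemma oppow_eig:
  assumes compl: "\<forall>i\<in>B. \<forall>j\<in>B. (\<Sum>k<N. u k i * cnj (u k j)) = (if i = j then 1 else 0)"
    and eig: "\<forall>k<N. \<forall>i\<in>B. (\<Sum>j\<in>B. A i j * u k j) = \<mu> k * u k i"
  shows "i \<in> B \<Longrightarrow> j \<in> B \<Longrightarrow> oppow B A n i j = (\<Sum>k<N. \<mu> k ^ n * u k i * cnj (u k j))"
proof (induction n arbitrary: i j)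
  case 0
  thus ?case using compl by (simp add: opid_def)
next
  case (Suc n)
  have "oppow B A (Suc n) i j = (\<Sum>l\<in>B. A i l * (\<Sum>k<N. \<mu> k ^ n * u k l * cnj (u k j)))"
    using Suc by (simp add: opmul_def)
  also have "\<dots> = (\<Sum>l\<in>B. \<Sum>k<N. A i l * (\<mu> k ^ n * u k l * cnj (u k j)))"
    by (simp add: sum_distrib_left)
  also have "\<dots> = (\<Sum>k<N. \<Sum>l\<in>B. A i l * (\<mu> k ^ n * u k l * cnj (u k j)))"
    by (rule sum.swap)
  also have "\<dots> = (\<Sum>k<N. (\<Sum>l\<in>B. A i l * u k l) * (\<mu> k ^ n * cnj (u k j)))"
    by (intro sum.cong refl, subst sum_distrib_right, simp add: mult_ac)
  also have "\<dots> = (\<Sum>k<N. \<mu> k ^ Suc n * u k i * cnj (u k j))"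
    using eig Suc.prems by (intro sum.cong refl, simp add: mult_ac)
  finally show ?case .
qed

lemma opexp_eig:
  assumes compl: "\<forall>i\<in>B. \<forall>j\<in>B. (\<Sum>k<N. u k i * cnj (u k j)) = (if i = j then 1 else 0)"
    and eig: "\<forall>k<N. \<forall>i\<in>B. (\<Sum>j\<in>B. A i j * u k j) = \<mu> k * u k i"
    and i: "i \<in> B" and j: "j \<in> B"
  shows "opexp B A i j = (\<Sum>k<N. exp (\<mu> k) * u k i * cnj (u k j))"
proof -
  have "opexp B A i j = (\<Sum>n. \<Sum>k<N. \<mu> k ^ n / of_nat (fact n) * (u k i * cnj (u k j)))"
    unfolding opexp_def using oppow_eig[OF compl eig i j]
    by (simp add: sum_divide_distrib mult_ac)
  also have "\<dots> = (\<Sum>k<N. \<Sum>n. \<mu> k ^ n / of_nat (fact n) * (u k i * cnj (u k j)))"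
    by (rule suminf_sum, rule summable_mult2, rule sums_summable[OF exp_sums_c])
  also have "\<dots> = (\<Sum>k<N. exp (\<mu> k) * (u k i * cnj (u k j)))"
    by (intro sum.cong refl, rule sums_unique[symmetric], rule sums_mult2, rule exp_sums_c)
  also have "\<dots> = (\<Sum>k<N. exp (\<mu> k) * u k i * cnj (u k j))"
    by (simp add: mult.assoc)
  finally show ?thesis .
qed

lemma RQ_expand:
  assumes F: "\<forall>i\<in>B. \<forall>j\<in>B. F i j = (\<Sum>k<N. f k * u k i * cnj (u k j))"
  shows "RQ B F w = (\<Sum>k<N. f k * cnj (\<Sum>j\<in>B. cnj (u k j) * w j) * (\<Sum>j\<in>B. cnj (u k j) * w j))"
proof -
  have "RQ B F w = (\<Sum>i\<in>B. \<Sum>j\<in>B. \<Sum>k<N. cnj (w i) * (f k * u k i * cnj (u k j)) * w j)"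
    unfolding RQ_def using F by (intro sum.cong refl, simp add: sum_distrib_left sum_distrib_right)
  also have "\<dots> = (\<Sum>i\<in>B. \<Sum>k<N. \<Sum>j\<in>B. cnj (w i) * (f k * u k i * cnj (u k j)) * w j)"
    by (intro sum.cong refl, rule sum.swap)
  also have "\<dots> = (\<Sum>k<N. \<Sum>i\<in>B. \<Sum>j\<in>B. cnj (w i) * (f k * u k i * cnj (u k j)) * w j)"
    by (rule sum.swap)
  also have "\<dots> = (\<Sum>k<N. f k * (\<Sum>i\<in>B. cnj (w i) * u k i) * (\<Sum>j\<in>B. cnj (u k j) * w j))"
    by (intro sum.cong refl, simp add: sum_distrib_left sum_distrib_right mult_ac)
  also have "\<dots> = (\<Sum>k<N. f k * cnj (\<Sum>j\<in>B. cnj (u k j) * w j) * (\<Sum>j\<in>B. cnj (u k j) * w j))"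
    by (simp add: cnj_sum mult.commute)
  finally show ?thesis .
qed

lemma RQ_diag:
  assumes Odiag: "\<forall>i\<in>B. \<forall>j\<in>B. i \<noteq> j \<longrightarrow> Ob i j = 0"
    and Oreal: "\<forall>i\<in>B. Ob i i = complex_of_real (ov i)" and fin: "finite B"
  shows "RQ B Ob v = complex_of_real (\<Sum>i\<in>B. ov i * (cmod (v i))^2)"
proof -
  have "RQ B Ob v = (\<Sum>i\<in>B. cnj (v i) * Ob i i * v i)"
    unfolding RQ_def
  proof (intro sum.cong refl)
    fix i assume i: "i \<in> B"
    have "(\<Sum>j\<in>B. cnj (v i) * Ob i j * v j) = (\<Sum>j\<in>B. if j = i then cnj (v i) * Ob i i * v i else 0)"
      using Odiag i by (intro sum.cong refl, auto)
    also have "\<dots> = cnj (v i) * Ob i i * v i" using i fin by simp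
    finally show "(\<Sum>j\<in>B. cnj (v i) * Ob i j * v j) = cnj (v i) * Ob i i * v i" .
  qed
  also have "\<dots> = (\<Sum>i\<in>B. complex_of_real (ov i * (cmod (v i))^2))"
  proof (intro sum.cong refl)
    fix i assume i: "i \<in> B"
    have e1: "Ob i i = complex_of_real (ov i)" using Oreal i by blast
    show "cnj (v i) * Ob i i * v i = complex_of_real (ov i * (cmod (v i))^2)"
      unfolding of_real_mult e1 cnj_mult_self[symmetric] by (simp only: mult_ac)
  qed
  finally show ?thesis by simp
qed


lemma gibbs_bound:
  fixes B :: "'b set" and H Ob :: "'b op" and ov :: "'b \<Rightarrow> real"
  assumes fin: "finite B" and ne: "B \<noteq> {}"
    and herm: "\<forall>i\<in>B. \<forall>j\<in>B. H i j = cnj (H j i)"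
    and Odiag: "\<forall>i\<in>B. \<forall>j\<in>B. i \<noteq> j \<longrightarrow> Ob i j = 0"
    and Oreal: "\<forall>i\<in>B. Ob i i = complex_of_real (ov i)"
    and obd: "\<forall>i\<in>B. c - pm \<le> ov i \<and> ov i \<le> c"
    and beta: "\<beta> > 0" and hpos: "h > 0" and apos: "a > 0"
    and low: "\<forall>v. nrm B v = 1 \<longrightarrow> Re (RQ B H v) \<ge> - h * Re (RQ B Ob v) + El"
    and wn: "nrm B w = 1" and up: "Re (RQ B H w) \<le> Eu"
  shows "\<exists>g. gibbs B H \<beta> Ob = complex_of_real g \<and> g \<le> c \<and>
             c - g \<le> (Eu - El + h * c + a) / h + real (card B) * pm * exp (- \<beta> * a)"
proof -
  define N where "N = card B"
  have N0: "N > 0" using fin ne N_def by (simp add: card_gt_0_iff)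
  obtain u lam where on: "\<forall>k<N. \<forall>l<N. (\<Sum>i\<in>B. cnj (u k i) * u l i) = (if k = l then 1 else 0)"
    and compl: "\<forall>i\<in>B. \<forall>j\<in>B. (\<Sum>k<N. u k i * cnj (u k j)) = (if i = j then 1 else 0)"
    and eig: "\<forall>k<N. \<forall>i\<in>B. (\<Sum>j\<in>B. H i j * u k j) = complex_of_real (lam k) * u k i"
    using spectral_fun[OF fin herm] unfolding N_def by blast
  have unit: "nrm B (u k) = 1" if k: "k < N" for k
  proof -
    have "complex_of_real (nrm B (u k)) = (\<Sum>i\<in>B. cnj (u k i) * u k i)"
      unfolding nrm_def by (simp add: cnj_mult_self)
    also have "\<dots> = 1" using on k by simp
    finally show ?thesis by (metis of_real_eq_1_iff)
  qed
  have RQH: "RQ B H (u k) = complex_of_real (lam k)" if k: "k < N" for k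
  proof -
    have "RQ B H (u k) = (\<Sum>i\<in>B. cnj (u k i) * (\<Sum>j\<in>B. H i j * u k j))"
      unfolding RQ_def by (simp add: sum_distrib_left mult.assoc)
    also have "\<dots> = (\<Sum>i\<in>B. complex_of_real (lam k) * (cnj (u k i) * u k i))"
      using eig k by (intro sum.cong refl, simp add: mult_ac)
    also have "\<dots> = complex_of_real (lam k)" using on k by (simp add: sum_distrib_left[symmetric])
    finally show ?thesis .
  qed
  define r where "r k = (\<Sum>i\<in>B. ov i * (cmod (u k i))^2)" for k
  have RQO: "RQ B Ob v = complex_of_real (\<Sum>i\<in>B. ov i * (cmod (v i))^2)" for v
    by (rule RQ_diag[OF Odiag Oreal fin])
  have lamlow: "lam k \<ge> - h * r k + El" if k: "k < N" for k
    using low[rule_format, OF unit[OF k]] RQH[OF k] RQO[of "u k"] unfolding r_def by simp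
  have rbd: "c - pm \<le> r k \<and> r k \<le> c" if k: "k < N" for k
  proof -
    have s1: "(\<Sum>i\<in>B. (cmod (u k i))^2) = 1" using unit[OF k] unfolding nrm_def .
    have "(\<Sum>i\<in>B. (c - pm) * (cmod (u k i))^2) \<le> r k"
      unfolding r_def using obd by (intro sum_mono mult_right_mono, auto)
    moreover have "r k \<le> (\<Sum>i\<in>B. c * (cmod (u k i))^2)"
      unfolding r_def using obd by (intro sum_mono mult_right_mono, auto)
    ultimately show ?thesis using s1 by (simp add: sum_distrib_left[symmetric])
  qed
  define m where "m = Min (lam ` {..<N})"
  have "m \<in> lam ` {..<N}" unfolding m_def using N0 by (intro Min_in, auto)
  then obtain k0 where k0: "k0 < N" and lk0: "lam k0 = m" by auto
  have minl: "k < N \<Longrightarrow> lam k0 \<le> lam k" for k unfolding lk0 m_def by (intro Min_le, auto)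
  have Hexp: "\<forall>i\<in>B. \<forall>j\<in>B. H i j = (\<Sum>k<N. complex_of_real (lam k) * u k i * cnj (u k j))"
  proof (intro ballI)
    fix i j assume i: "i \<in> B" and j: "j \<in> B"
    have "(\<Sum>k<N. complex_of_real (lam k) * u k i * cnj (u k j)) = (\<Sum>k<N. (\<Sum>l\<in>B. H i l * u k l) * cnj (u k j))"
      using eig i by (intro sum.cong refl, simp)
    also have "\<dots> = (\<Sum>l\<in>B. H i l * (\<Sum>k<N. u k l * cnj (u k j)))"
      by (simp add: sum_distrib_left sum_distrib_right mult_ac, rule sum.swap)
    also have "\<dots> = (\<Sum>l\<in>B. if l = j then H i l else 0)"
      using compl j by (intro sum.cong refl, simp)
    also have "\<dots> = H i j" using j fin by simp
    finally show "H i j = (\<Sum>k<N. complex_of_real (lam k) * u k i * cnj (u k j))" by simp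
  qed
  define cc where "cc k = (\<Sum>j\<in>B. cnj (u k j) * w j)" for k
  have idexp: "\<forall>i\<in>B. \<forall>j\<in>B. opid i j = (\<Sum>k<N. 1 * u k i * cnj (u k j))"
    using compl by (simp add: opid_def)
  have "RQ B opid w = (\<Sum>k<N. 1 * cnj (cc k) * cc k)"
    using RQ_expand[OF idexp] unfolding cc_def .
  moreover have "RQ B opid w = complex_of_real (nrm B w)"
    using RQ_diag[of B opid "\<lambda>_. 1" w] fin by (simp add: opid_def nrm_def)
  moreover have "(\<Sum>k<N. 1 * cnj (cc k) * cc k) = complex_of_real (\<Sum>k<N. (cmod (cc k))^2)"
    by (simp add: cnj_mult_self)
  ultimately have "complex_of_real (\<Sum>k<N. (cmod (cc k))^2) = 1" using wn by simp
  hence ccsum: "(\<Sum>k<N. (cmod (cc k))^2) = 1" by (metis of_real_eq_1_iff)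
  have "RQ B H w = (\<Sum>k<N. complex_of_real (lam k) * cnj (cc k) * cc k)"
    using RQ_expand[OF Hexp] unfolding cc_def .
  also have "\<dots> = complex_of_real (\<Sum>k<N. lam k * (cmod (cc k))^2)"
    by (simp add: cnj_mult_self mult.assoc)
  finally have "Re (RQ B H w) = (\<Sum>k<N. lam k * (cmod (cc k))^2)" by simp
  moreover have "(\<Sum>k<N. lam k0 * (cmod (cc k))^2) \<le> (\<Sum>k<N. lam k * (cmod (cc k))^2)"
    using minl by (intro sum_mono mult_right_mono, auto)
  ultimately have l0Eu: "lam k0 \<le> Eu" using up ccsum by (simp add: sum_distrib_left[symmetric])
  define wk where "wk k = exp (- \<beta> * lam k)" for k
  have eigA: "\<forall>k<N. \<forall>i\<in>B. (\<Sum>j\<in>B. (- complex_of_real \<beta> * H i j) * u k j) = complex_of_real (- \<beta> * lam k) * u k i"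
  proof (intro allI impI ballI)
    fix k i assume k: "k < N" and i: "i \<in> B"
    have "(\<Sum>j\<in>B. (- complex_of_real \<beta> * H i j) * u k j) = - complex_of_real \<beta> * (\<Sum>j\<in>B. H i j * u k j)"
      by (simp add: sum_distrib_left mult.assoc)
    thus "(\<Sum>j\<in>B. (- complex_of_real \<beta> * H i j) * u k j) = complex_of_real (- \<beta> * lam k) * u k i"
      using eig k i by simp
  qed
  define E where "E = opexp B (\<lambda>i j. - complex_of_real \<beta> * H i j)"
  have Eii: "E i i = complex_of_real (\<Sum>k<N. wk k * (cmod (u k i))^2)" if i: "i \<in> B" for i
  proof -
    have "E i i = (\<Sum>k<N. exp (complex_of_real (- \<beta> * lam k)) * u k i * cnj (u k i))"
      unfolding E_def by (rule opexp_eig[OF compl eigA i i])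
    also have "\<dots> = (\<Sum>k<N. complex_of_real (wk k * (cmod (u k i))^2))"
      by (intro sum.cong refl, simp add: wk_def exp_of_real[symmetric] mult.assoc mult.commute[of "u _ _"] cnj_mult_self)
    finally show ?thesis by simp
  qed
  define S0 where "S0 = (\<Sum>k<N. wk k)"
  define S1 where "S1 = (\<Sum>k<N. wk k * r k)"
  have wkpos: "wk k > 0" for k unfolding wk_def by simp
  have S0pos: "S0 > 0" unfolding S0_def using N0 wkpos by (intro sum_pos, auto)
  have trE: "optrace B E = complex_of_real S0"
  proof -
    have "optrace B E = complex_of_real (\<Sum>i\<in>B. \<Sum>k<N. wk k * (cmod (u k i))^2)"
      unfolding optrace_def using Eii by simp
    also have "(\<Sum>i\<in>B. \<Sum>k<N. wk k * (cmod (u k i))^2) = (\<Sum>k<N. wk k * (\<Sum>i\<in>B. (cmod (u k i))^2))"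
      by (subst sum.swap, simp add: sum_distrib_left)
    also have "\<dots> = S0" unfolding S0_def using unit by (intro sum.cong refl, simp add: nrm_def)
    finally show ?thesis .
  qed
  have trOE: "optrace B (opmul B Ob E) = complex_of_real S1"
  proof -
    have "optrace B (opmul B Ob E) = (\<Sum>i\<in>B. Ob i i * E i i)"
      unfolding optrace_def opmul_def
    proof (intro sum.cong refl)
      fix i assume i: "i \<in> B"
      have "(\<Sum>k\<in>B. Ob i k * E k i) = (\<Sum>k\<in>B. if k = i then Ob i i * E i i else 0)"
        using Odiag i by (intro sum.cong refl, auto)
      also have "\<dots> = Ob i i * E i i" using i fin by simp
      finally show "(\<Sum>k\<in>B. Ob i k * E k i) = Ob i i * E i i" .
    qed
    also have "\<dots> = complex_of_real (\<Sum>i\<in>B. ov i * (\<Sum>k<N. wk k * (cmod (u k i))^2))"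
      using Oreal Eii by simp
    also have "(\<Sum>i\<in>B. ov i * (\<Sum>k<N. wk k * (cmod (u k i))^2)) = S1"
      unfolding S1_def r_def
      by (simp add: sum_distrib_left sum_distrib_right mult_ac, rule sum.swap)
    finally show ?thesis .
  qed
  define g where "g = S1 / S0"
  have gib: "gibbs B H \<beta> Ob = complex_of_real g"
    unfolding gibbs_def g_def using trE trOE unfolding E_def by simp
  have "S1 \<le> (\<Sum>k<N. c * wk k)" unfolding S1_def
    using rbd wkpos by (intro sum_mono, simp add: mult.commute less_imp_le mult_left_mono)
  hence gc: "g \<le> c" unfolding g_def using S0pos by (simp add: S0_def sum_distrib_left[symmetric] divide_le_eq mult.commute)
  define X where "X = (Eu - El + h * c + a) / h"
  have X0: "X \<ge> 0"
  proof -
    have "h * r k0 \<le> h * c" using rbd[OF k0] hpos by (simp add: mult_left_mono)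
    hence "lam k0 \<ge> - h * c + El" using lamlow[OF k0] by linarith
    thus ?thesis unfolding X_def using l0Eu hpos apos by simp
  qed
  have each: "wk k * (c - r k) \<le> wk k * X + S0 * exp (- \<beta> * a) * pm" if k: "k < N" for k
  proof (cases "lam k \<le> lam k0 + a")
    case True
    have "h * (c - r k) \<le> Eu - El + h * c + a"
      using lamlow[OF k] True l0Eu by (simp add: algebra_simps)
    hence "c - r k \<le> X" unfolding X_def using hpos by (simp add: le_divide_eq mult.commute)
    hence "wk k * (c - r k) \<le> wk k * X" using wkpos by (simp add: less_imp_le mult_left_mono)
    moreover have "S0 * exp (- \<beta> * a) * pm \<ge> 0"
      using S0pos rbd[OF k] by (intro mult_nonneg_nonneg, auto)
    ultimately show ?thesis by simp
  next
    case False
    have "wk k \<le> wk k0 * exp (- \<beta> * a)"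
    proof -
      have "\<beta> * (a + lam k0) \<le> \<beta> * lam k" using False beta by (intro mult_left_mono, auto)
      thus ?thesis unfolding wk_def by (simp add: exp_add[symmetric] algebra_simps)
    qed
    also have "wk k0 \<le> S0" unfolding S0_def using k0 wkpos
      by (intro member_le_sum, auto simp: less_imp_le)
    hence "wk k0 * exp (- \<beta> * a) \<le> S0 * exp (- \<beta> * a)" by simp
    finally have wb: "wk k \<le> S0 * exp (- \<beta> * a)" .
    have p: "0 \<le> c - r k" "c - r k \<le> pm" using rbd[OF k] by auto
    have "wk k * (c - r k) \<le> S0 * exp (- \<beta> * a) * pm"
      using mult_mono[OF wb p(2)] wkpos[of k] p(1) S0pos by (simp add: less_imp_le)
    moreover have "wk k * X \<ge> 0" using wkpos X0 by (simp add: less_imp_le)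
    ultimately show ?thesis by simp
  qed
  have "S0 * (c - g) = c * S0 - S1" unfolding g_def using S0pos by (simp add: field_simps)
  also have "\<dots> = (\<Sum>k<N. wk k * (c - r k))"
    unfolding S0_def S1_def by (simp add: right_diff_distrib sum_subtractf sum_distrib_left mult.commute)
  also have "\<dots> \<le> (\<Sum>k<N. wk k * X + S0 * exp (- \<beta> * a) * pm)"
    using each by (intro sum_mono, auto)
  also have "\<dots> = S0 * (X + real N * pm * exp (- \<beta> * a))"
    by (simp add: sum.distrib sum_distrib_left[symmetric] S0_def algebra_simps)
  finally have "c - g \<le> X + real N * pm * exp (- \<beta> * a)"
    using S0pos by (simp add: mult_le_cancel_left_pos)
  thus ?thesis using gib gc unfolding X_def N_def by blast
qed

definition rowb :: "'b set \<Rightarrow> 'b op \<Rightarrow> real \<Rightarrow> bool" where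
  "rowb B A s \<longleftrightarrow> (\<forall>i\<in>B. (\<Sum>j\<in>B. cmod (A i j)) \<le> s)"

definition colb :: "'b set \<Rightarrow> 'b op \<Rightarrow> real \<Rightarrow> bool" where
  "colb B A s \<longleftrightarrow> (\<forall>j\<in>B. (\<Sum>i\<in>B. cmod (A i j)) \<le> s)"

lemma RQ_bound_fg:
  assumes fin: "finite B"
    and pt: "\<forall>i\<in>B. \<forall>j\<in>B. cmod (v i) * cmod (A i j) * cmod (v j) \<le> cmod (A i j) * (f i + g j)"
    and f0: "\<forall>i\<in>B. f i \<ge> 0" and g0: "\<forall>j\<in>B. g j \<ge> 0"
    and r: "rowb B A s" and c: "colb B A s"
  shows "cmod (RQ B A v) \<le> s * (\<Sum>i\<in>B. f i) + s * (\<Sum>j\<in>B. g j)"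
proof -
  have "cmod (RQ B A v) \<le> (\<Sum>i\<in>B. \<Sum>j\<in>B. cmod (v i) * cmod (A i j) * cmod (v j))"
    unfolding RQ_def
    by (rule order.trans[OF norm_sum sum_mono], rule order.trans[OF norm_sum sum_mono], simp add: norm_mult)
  also have "\<dots> \<le> (\<Sum>i\<in>B. \<Sum>j\<in>B. cmod (A i j) * f i + cmod (A i j) * g j)"
    using pt by (intro sum_mono, simp add: algebra_simps)
  also have "\<dots> = (\<Sum>i\<in>B. f i * (\<Sum>j\<in>B. cmod (A i j))) + (\<Sum>j\<in>B. g j * (\<Sum>i\<in>B. cmod (A i j)))"
    by (simp add: sum.distrib sum_distrib_left mult.commute, rule sum.swap)
  also have "\<dots> \<le> (\<Sum>i\<in>B. f i * s) + (\<Sum>j\<in>B. g j * s)"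
    using r c f0 g0 unfolding rowb_def colb_def by (intro add_mono sum_mono mult_left_mono, auto)
  finally show ?thesis by (simp add: sum_distrib_left mult.commute)
qed

lemma amgm: fixes x y d :: real assumes "d > 0" shows "x * y \<le> (d * y^2 + x^2 / d) / 2"
proof -
  have "0 \<le> (d * y - x)^2 / d" using assms by simp
  also have "(d * y - x)^2 / d = d * y^2 - 2 * x * y + x^2 / d"
    using assms by (simp add: power2_eq_square field_simps)
  finally show ?thesis by simp
qed

lemma schur:
  assumes fin: "finite B" and r: "rowb B A s" and c: "colb B A s"
  shows "cmod (RQ B A v) \<le> s * nrm B v"
proof -
  have "cmod (RQ B A v) \<le> s * (\<Sum>i\<in>B. (cmod (v i))^2 / 2) + s * (\<Sum>j\<in>B. (cmod (v j))^2 / 2)"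
  proof (rule RQ_bound_fg[OF fin _ _ _ r c])
    show "\<forall>i\<in>B. \<forall>j\<in>B. cmod (v i) * cmod (A i j) * cmod (v j) \<le> cmod (A i j) * ((cmod (v i))^2 / 2 + (cmod (v j))^2 / 2)"
    proof (intro ballI)
      fix i j
      have "cmod (v i) * cmod (v j) \<le> (1 * (cmod (v j))^2 + (cmod (v i))^2 / 1) / 2" by (rule amgm, simp)
      hence "cmod (A i j) * (cmod (v i) * cmod (v j)) \<le> cmod (A i j) * ((cmod (v i))^2 / 2 + (cmod (v j))^2 / 2)"
        by (intro mult_left_mono, auto)
      thus "cmod (v i) * cmod (A i j) * cmod (v j) \<le> cmod (A i j) * ((cmod (v i))^2 / 2 + (cmod (v j))^2 / 2)"
        by (simp add: mult_ac)
    qed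
  qed auto
  also have "\<dots> = s * nrm B v" unfolding nrm_def by (simp add: sum_divide_distrib[symmetric])
  finally show ?thesis .
qed

lemma wschur:
  assumes fin: "finite B" and r: "rowb B A 1" and c: "colb B A 1" and dpos: "dl > 0"
    and kb: "\<forall>i\<in>B. 0 \<le> k i \<and> k i \<le> 1"
    and kA: "\<forall>i\<in>B. \<forall>j\<in>B. A i j \<noteq> 0 \<longrightarrow> k i + k j \<ge> 1"
  shows "cmod (RQ B A v) \<le> dl * nrm B v + (\<Sum>i\<in>B. k i * (cmod (v i))^2) / dl"
proof -
  define f where "f i = (dl * (cmod (v i))^2 + k i * (cmod (v i))^2 / dl) / 2" for i
  have "cmod (RQ B A v) \<le> 1 * (\<Sum>i\<in>B. f i) + 1 * (\<Sum>j\<in>B. f j)"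
  proof (rule RQ_bound_fg[OF fin _ _ _ r c])
    show "\<forall>i\<in>B. \<forall>j\<in>B. cmod (v i) * cmod (A i j) * cmod (v j) \<le> cmod (A i j) * (f i + f j)"
    proof (intro ballI)
      fix i j assume i: "i \<in> B" and j: "j \<in> B"
      show "cmod (v i) * cmod (A i j) * cmod (v j) \<le> cmod (A i j) * (f i + f j)"
      proof (cases "A i j = 0")
        case True thus ?thesis by simp
      next
        case False
        define x where "x = cmod (v i)"
        define y where "y = cmod (v j)"
        have kk: "k i + k j \<ge> 1" using kA i j False by auto
        have ki: "0 \<le> k i" "k i \<le> 1" and kj: "0 \<le> k j" "k j \<le> 1" using kb i j by auto
        have xy: "x \<ge> 0" "y \<ge> 0" unfolding x_def y_def by auto
        have "x * y \<le> (k i + k j) * (x * y)" using kk xy mult_right_mono[OF kk, of "x * y"] by simp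
        also have "\<dots> = k i * (x * y) + k j * (y * x)" by (simp add: algebra_simps)
        also have "k i * (x * y) \<le> k i * ((dl * y^2 + x^2 / dl) / 2)"
          using amgm[OF dpos] ki by (intro mult_left_mono, auto)
        also have "k j * (y * x) \<le> k j * ((dl * x^2 + y^2 / dl) / 2)"
          using amgm[OF dpos] kj by (intro mult_left_mono, auto)
        also have "k i * ((dl * y^2 + x^2 / dl) / 2) + k j * ((dl * x^2 + y^2 / dl) / 2) \<le>
                   (dl * x^2 + k i * x^2 / dl) / 2 + (dl * y^2 + k j * y^2 / dl) / 2"
        proof -
          have "k i * (dl * y^2) \<le> dl * y^2" using ki dpos by (simp add: mult_left_le_one_le)
          moreover have "k j * (dl * x^2) \<le> dl * x^2" using kj dpos by (simp add: mult_left_le_one_le)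
          ultimately show ?thesis by (simp add: field_simps)
        qed
        finally have "x * y \<le> f i + f j" unfolding f_def x_def y_def by simp
        hence "cmod (A i j) * (x * y) \<le> cmod (A i j) * (f i + f j)" by (intro mult_left_mono, auto)
        thus ?thesis unfolding x_def y_def by (simp add: mult_ac)
      qed
    qed
    show "\<forall>i\<in>B. f i \<ge> 0" "\<forall>i\<in>B. f i \<ge> 0" unfolding f_def using kb dpos by auto
  qed
  also have "\<dots> = dl * nrm B v + (\<Sum>i\<in>B. k i * (cmod (v i))^2) / dl"
    unfolding f_def nrm_def by (simp add: sum.distrib sum_divide_distrib[symmetric] sum_distrib_left)
  finally show ?thesis .
qed

lemma rowb_single:
  assumes "finite B" "\<forall>i\<in>B. \<forall>j\<in>B. A i j \<noteq> 0 \<longrightarrow> j = p i" "\<forall>i\<in>B. \<forall>j\<in>B. cmod (A i j) \<le> s" "s \<ge> 0"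
  shows "rowb B A s"
  unfolding rowb_def
proof
  fix i assume i: "i \<in> B"
  have "(\<Sum>j\<in>B. cmod (A i j)) = (\<Sum>j\<in>B. if j = p i then cmod (A i j) else 0)"
    using assms(2) i by (intro sum.cong refl, auto)
  also have "\<dots> \<le> s" using assms i by (auto simp: sum.delta)
  finally show "(\<Sum>j\<in>B. cmod (A i j)) \<le> s" .
qed

lemma colb_single:
  assumes "finite B" "\<forall>i\<in>B. \<forall>j\<in>B. A i j \<noteq> 0 \<longrightarrow> i = q j" "\<forall>i\<in>B. \<forall>j\<in>B. cmod (A i j) \<le> s" "s \<ge> 0"
  shows "colb B A s"
  unfolding colb_def
proof
  fix j assume j: "j \<in> B"
  have "(\<Sum>i\<in>B. cmod (A i j)) = (\<Sum>i\<in>B. if i = q j then cmod (A i j) else 0)"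
    using assms(2) j by (intro sum.cong refl, auto)
  also have "\<dots> \<le> s" using assms j by (auto simp: sum.delta)
  finally show "(\<Sum>i\<in>B. cmod (A i j)) \<le> s" .
qed

lemma rowb_mul:
  assumes fin: "finite B" and a: "rowb B A a" and c: "rowb B C c" and c0: "c \<ge> 0"
  shows "rowb B (opmul B A C) (a * c)"
  unfolding rowb_def opmul_def
proof
  fix i assume i: "i \<in> B"
  have "(\<Sum>j\<in>B. cmod (\<Sum>k\<in>B. A i k * C k j)) \<le> (\<Sum>j\<in>B. \<Sum>k\<in>B. cmod (A i k) * cmod (C k j))"
    by (intro sum_mono, rule order.trans[OF norm_sum], simp add: norm_mult)
  also have "\<dots> = (\<Sum>k\<in>B. cmod (A i k) * (\<Sum>j\<in>B. cmod (C k j)))"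
    by (subst sum.swap, simp add: sum_distrib_left)
  also have "\<dots> \<le> (\<Sum>k\<in>B. cmod (A i k) * c)"
    using c unfolding rowb_def by (intro sum_mono mult_left_mono, auto)
  also have "\<dots> \<le> a * c" using a i c0 unfolding rowb_def
    by (simp add: sum_distrib_right[symmetric] mult_right_mono)
  finally show "(\<Sum>j\<in>B. cmod (\<Sum>k\<in>B. A i k * C k j)) \<le> a * c" .
qed

lemma colb_mul:
  assumes fin: "finite B" and a: "colb B A a" and c: "colb B C c" and a0: "a \<ge> 0"
  shows "colb B (opmul B A C) (a * c)"
  unfolding colb_def opmul_def
proof
  fix j assume j: "j \<in> B"
  have "(\<Sum>i\<in>B. cmod (\<Sum>k\<in>B. A i k * C k j)) \<le> (\<Sum>i\<in>B. \<Sum>k\<in>B. cmod (A i k) * cmod (C k j))"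
    by (intro sum_mono, rule order.trans[OF norm_sum], simp add: norm_mult)
  also have "\<dots> = (\<Sum>k\<in>B. cmod (C k j) * (\<Sum>i\<in>B. cmod (A i k)))"
    by (subst sum.swap, simp add: sum_distrib_left mult.commute)
  also have "\<dots> \<le> (\<Sum>k\<in>B. cmod (C k j) * a)"
    using a unfolding colb_def by (intro sum_mono mult_left_mono, auto)
  also have "\<dots> \<le> c * a" using c j a0 unfolding colb_def
    by (simp add: sum_distrib_right[symmetric] mult_right_mono)
  finally show "(\<Sum>i\<in>B. cmod (\<Sum>k\<in>B. A i k * C k j)) \<le> a * c" by (simp add: mult.commute)
qed

lemma rowb_add:
  assumes "rowb B A a" "rowb B C c"
  shows "rowb B (\<lambda>i j. A i j + C i j) (a + c)"
  using assms unfolding rowb_def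
  by (auto intro!: order.trans[OF sum_mono[OF norm_triangle_ineq]] simp: sum.distrib add_mono)

lemma colb_add:
  assumes "colb B A a" "colb B C c"
  shows "colb B (\<lambda>i j. A i j + C i j) (a + c)"
  using assms unfolding colb_def
  by (auto intro!: order.trans[OF sum_mono[OF norm_triangle_ineq]] simp: sum.distrib add_mono)

lemma rowb_diff:
  assumes "rowb B A a" "rowb B C c"
  shows "rowb B (\<lambda>i j. A i j - C i j) (a + c)"
  using assms unfolding rowb_def
  by (auto intro!: order.trans[OF sum_mono[OF norm_triangle_ineq4]] simp: sum.distrib add_mono)

lemma colb_diff:
  assumes "colb B A a" "colb B C c"
  shows "colb B (\<lambda>i j. A i j - C i j) (a + c)"
  using assms unfolding colb_def
  by (auto intro!: order.trans[OF sum_mono[OF norm_triangle_ineq4]] simp: sum.distrib add_mono)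

lemma rowb_scale:
  assumes "rowb B A a"
  shows "rowb B (\<lambda>i j. z * A i j) (cmod z * a)"
  using assms unfolding rowb_def by (auto simp: norm_mult sum_distrib_left[symmetric] mult_left_mono)

lemma colb_scale:
  assumes "colb B A a"
  shows "colb B (\<lambda>i j. z * A i j) (cmod z * a)"
  using assms unfolding colb_def by (auto simp: norm_mult sum_distrib_left[symmetric] mult_left_mono)

lemma RQ_add: "RQ B (\<lambda>i j. A i j + C i j) v = RQ B A v + RQ B C v"
  unfolding RQ_def by (simp add: algebra_simps sum.distrib)

lemma RQ_diff: "RQ B (\<lambda>i j. A i j - C i j) v = RQ B A v - RQ B C v"
  unfolding RQ_def by (simp add: algebra_simps sum_subtractf)

lemma RQ_scale: "RQ B (\<lambda>i j. z * A i j) v = z * RQ B A v"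
  unfolding RQ_def by (simp add: sum_distrib_left mult_ac)

lemma RQ_sum: "RQ B (\<lambda>i j. \<Sum>x\<in>X. F x i j) v = (\<Sum>x\<in>X. RQ B (F x) v)"
proof -
  have "RQ B (\<lambda>i j. \<Sum>x\<in>X. F x i j) v = (\<Sum>i\<in>B. \<Sum>j\<in>B. \<Sum>x\<in>X. cnj (v i) * F x i j * v j)"
    unfolding RQ_def by (simp add: sum_distrib_left sum_distrib_right)
  also have "\<dots> = (\<Sum>i\<in>B. \<Sum>x\<in>X. \<Sum>j\<in>B. cnj (v i) * F x i j * v j)"
    by (intro sum.cong refl, rule sum.swap)
  also have "\<dots> = (\<Sum>x\<in>X. RQ B (F x) v)" unfolding RQ_def by (rule sum.swap)
  finally show ?thesis .
qed

lemma coord_lt: "L > 0 \<Longrightarrow> coord L x i < L"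
  by (simp add: coord_def)

lemma sites_inj:
  assumes L: "L > 0"
  shows "y < L ^ d \<Longrightarrow> y' < L ^ d \<Longrightarrow> (\<forall>i<d. coord L y i = coord L y' i) \<Longrightarrow> y = y'"
proof (induction d arbitrary: y y')
  case 0 thus ?case by simp
next
  case (Suc d)
  have m: "y mod L = y' mod L" using Suc.prems(3)[rule_format, of 0] by (simp add: coord_def)
  have "y div L < L ^ d" using Suc.prems(1) L by (simp add: less_mult_imp_div_less mult.commute)
  moreover have "y' div L < L ^ d" using Suc.prems(2) L by (simp add: less_mult_imp_div_less mult.commute)
  moreover have "\<forall>i<d. coord L (y div L) i = coord L (y' div L) i"
  proof (intro allI impI)
    fix i assume "i < d"
    hence "coord L y (Suc i) = coord L y' (Suc i)" using Suc.prems(3) by simp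
    thus "coord L (y div L) i = coord L (y' div L) i" by (simp add: coord_def div_mult2_eq)
  qed
  ultimately have "y div L = y' div L" using Suc.IH by blast
  with m show ?case by (metis div_mult_mod_eq)
qed

lemma suc_mod_inj: "a < (L::nat) \<Longrightarrow> b < L \<Longrightarrow> (a + 1) mod L = (b + 1) mod L \<Longrightarrow> a = b"
  by (metis Suc_eq_plus1 Suc_leI le_neq_implies_less mod_less mod_self nat.inject old.nat.distinct(2) zero_less_Suc)

lemma card_fwd: assumes L: "L > 0" shows "card {y \<in> sites L d. nbr L d x y} \<le> d"
proof -
  define P where "P i y \<longleftrightarrow> y \<in> sites L d \<and> coord L y i = (coord L x i + 1) mod L \<and>
      (\<forall>j<d. j \<noteq> i \<longrightarrow> coord L y j = coord L x j)" for i y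
  define F where "F i = (SOME y. P i y)" for i
  have uniq: "P i y \<Longrightarrow> P i y' \<Longrightarrow> y = y'" for i y y'
    unfolding P_def sites_def by (intro sites_inj[OF L], auto, metis)
  have "{y \<in> sites L d. nbr L d x y} \<subseteq> F ` {..<d}"
  proof
    fix y assume "y \<in> {y \<in> sites L d. nbr L d x y}"
    then obtain i where i: "i < d" and Py: "P i y" unfolding nbr_def P_def by auto
    have "P i (F i)" unfolding F_def using Py by (rule someI)
    hence "F i = y" using uniq Py by blast
    thus "y \<in> F ` {..<d}" using i by auto
  qed
  hence "card {y \<in> sites L d. nbr L d x y} \<le> card (F ` {..<d})" by (intro card_mono, auto)
  also have "\<dots> \<le> d" using card_image_le[of "{..<d}" F] by simp
  finally show ?thesis .
qed

lemma card_bwd: assumes L: "L > 0" shows "card {y \<in> sites L d. nbr L d y x} \<le> d"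
proof -
  define P where "P i y \<longleftrightarrow> y \<in> sites L d \<and> coord L x i = (coord L y i + 1) mod L \<and>
      (\<forall>j<d. j \<noteq> i \<longrightarrow> coord L x j = coord L y j)" for i y
  define F where "F i = (SOME y. P i y)" for i
  have uniq: "P i y \<Longrightarrow> P i y' \<Longrightarrow> y = y'" for i y y'
  proof -
    assume a: "P i y" "P i y'"
    show "y = y'"
    proof (rule sites_inj[OF L])
      show "y < L ^ d" "y' < L ^ d" using a unfolding P_def sites_def by auto
      show "\<forall>j<d. coord L y j = coord L y' j"
      proof (intro allI impI)
        fix j assume j: "j < d"
        show "coord L y j = coord L y' j"
        proof (cases "j = i")
          case True
          thus ?thesis using a suc_mod_inj[OF coord_lt[OF L] coord_lt[OF L]] unfolding P_def by metis
        next
          case False thus ?thesis using a j unfolding P_def by metis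
        qed
      qed
    qed
  qed
  have "{y \<in> sites L d. nbr L d y x} \<subseteq> F ` {..<d}"
  proof
    fix y assume "y \<in> {y \<in> sites L d. nbr L d y x}"
    then obtain i where i: "i < d" and Py: "P i y" unfolding nbr_def P_def by auto
    have "P i (F i)" unfolding F_def using Py by (rule someI)
    hence "F i = y" using uniq Py by blast
    thus "y \<in> F ` {..<d}" using i by auto
  qed
  hence "card {y \<in> sites L d. nbr L d y x} \<le> card (F ` {..<d})" by (intro card_mono, auto)
  also have "\<dots> \<le> d" using card_image_le[of "{..<d}" F] by simp
  finally show ?thesis .
qed

lemma finite_sites[simp]: "finite (sites L d)" by (simp add: sites_def)

lemma finite_bonds: "finite (bonds L d)"
proof -
  have "bonds L d \<subseteq> (\<lambda>(x,y). {x,y}) ` (sites L d \<times> sites L d)"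
    unfolding bonds_def by auto
  thus ?thesis by (rule finite_subset, simp)
qed

lemma bp_sub: "b \<in> bonds L d \<Longrightarrow> bond_pairs b \<subseteq> sites L d \<times> sites L d"
  unfolding bonds_def bond_pairs_def by auto

lemma finite_bp: "b \<in> bonds L d \<Longrightarrow> finite (bond_pairs b)"
  by (metis bp_sub finite_SigmaI finite_sites finite_subset)

lemma bp_disj:
  assumes "b1 \<in> bonds L d" "b2 \<in> bonds L d" "b1 \<noteq> b2"
  shows "bond_pairs b1 \<inter> bond_pairs b2 = {}"
proof (rule ccontr)
  assume "bond_pairs b1 \<inter> bond_pairs b2 \<noteq> {}"
  then obtain x y where xy: "(x,y) \<in> bond_pairs b1" "(x,y) \<in> bond_pairs b2" by auto
  obtain x1 y1 where b1: "b1 = {x1,y1}" using assms(1) unfolding bonds_def by auto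
  obtain x2 y2 where b2: "b2 = {x2,y2}" using assms(2) unfolding bonds_def by auto
  have "b1 = {x,y}" using xy(1) unfolding b1 bond_pairs_def by auto
  moreover have "b2 = {x,y}" using xy(2) unfolding b2 bond_pairs_def by auto
  ultimately show False using assms(3) by simp
qed

lemma bp_nbr:
  assumes "b \<in> bonds L d" "(x,y) \<in> bond_pairs b"
  shows "x \<in> sites L d \<and> y \<in> sites L d \<and> x \<noteq> y \<and> (nbr L d x y \<or> nbr L d y x)"
proof -
  obtain x1 y1 where b: "b = {x1,y1}" and n: "nbr L d x1 y1" "x1 \<in> sites L d" "y1 \<in> sites L d"
    using assms(1) unfolding bonds_def by auto
  have "x \<noteq> y" "x \<in> b" "y \<in> b" using assms(2) unfolding bond_pairs_def by auto
  thus ?thesis using b n by auto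
qed

lemma bond_sum:
  assumes L: "L > 0" and g0: "\<forall>x\<in>sites L d. g x \<ge> (0::real)"
  shows "(\<Sum>b\<in>bonds L d. \<Sum>(x,y)\<in>bond_pairs b. g x) \<le> 2 * d * (\<Sum>x\<in>sites L d. g x)"
proof -
  define nb where "nb x = {y \<in> sites L d. nbr L d x y} \<union> {y \<in> sites L d. nbr L d y x}" for x
  have cnb: "card (nb x) \<le> 2 * d" for x
    unfolding nb_def using card_Un_le[of "{y \<in> sites L d. nbr L d x y}" "{y \<in> sites L d. nbr L d y x}"]
      card_fwd[OF L, of d x] card_bwd[OF L, of d x] by linarith
  have cnb': "real (card (nb x)) \<le> 2 * real d" for x
  proof -
    have "real (card (nb x)) \<le> real (2 * d)" using cnb[of x] by (simp only: of_nat_le_iff)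
    thus ?thesis by simp
  qed
  have "(\<Sum>b\<in>bonds L d. \<Sum>(x,y)\<in>bond_pairs b. g x) = (\<Sum>p\<in>(\<Union>b\<in>bonds L d. bond_pairs b). (\<lambda>(x,y). g x) p)"
    by (rule sum.UNION_disjoint[symmetric], rule finite_bonds, simp add: finite_bp, simp add: bp_disj)
  also have "\<dots> \<le> (\<Sum>p\<in>Sigma (sites L d) nb. (\<lambda>(x,y). g x) p)"
  proof (rule sum_mono2)
    show "finite (Sigma (sites L d) nb)" unfolding nb_def by simp
    show "(\<Union>b\<in>bonds L d. bond_pairs b) \<subseteq> Sigma (sites L d) nb"
      using bp_nbr unfolding nb_def by fastforce
    show "\<And>p. p \<in> Sigma (sites L d) nb - (\<Union>b\<in>bonds L d. bond_pairs b) \<Longrightarrow> 0 \<le> (\<lambda>(x,y). g x) p"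
      using g0 by auto
  qed
  also have "\<dots> = (\<Sum>x\<in>sites L d. \<Sum>y\<in>nb x. g x)"
    by (subst sum.Sigma, auto simp: nb_def)
  also have "\<dots> = (\<Sum>x\<in>sites L d. real (card (nb x)) * g x)" by simp
  also have "\<dots> \<le> (\<Sum>x\<in>sites L d. 2 * d * g x)"
    using g0 cnb' by (intro sum_mono mult_right_mono, auto)
  finally show ?thesis by (simp add: sum_distrib_left)
qed

definition etar :: "nat \<Rightarrow> nat \<Rightarrow> nat \<Rightarrow> real" where
  "etar L d x = (-1) ^ (\<Sum>i<d. coord L x i)"

lemma eta_etar: "eta L d x = complex_of_real (etar L d x)"
  by (simp add: eta_def etar_def)

lemma etar_pm: "etar L d x = 1 \<or> etar L d x = -1"
  by (simp add: etar_def neg_one_even_power neg_one_odd_power, metis neg_one_even_power neg_one_odd_power)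

lemma rowb_mono: "rowb B A s \<Longrightarrow> s \<le> s' \<Longrightarrow> rowb B A s'"
  unfolding rowb_def by force
lemma colb_mono: "colb B A s \<Longrightarrow> s \<le> s' \<Longrightarrow> colb B A s'"
  unfolding colb_def by force

definition flip :: "nat \<Rightarrow> nat set \<Rightarrow> nat set" where
  "flip x A = (if x \<in> A then A - {x} else insert x A)"

lemma S1_supp: "S1 x A' A \<noteq> 0 \<Longrightarrow> A = flip x A' \<and> A' = flip x A"
  unfolding S1_def flip_def by (auto split: if_splits)
lemma S2_supp: "S2 x A' A \<noteq> 0 \<Longrightarrow> A = flip x A' \<and> A' = flip x A"
  unfolding S2_def flip_def by (auto split: if_splits)
lemma S3_supp: "S3 x A' A \<noteq> 0 \<Longrightarrow> A = A'"
  unfolding S3_def by (auto split: if_splits)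

lemma S1_norm: "cmod (S1 x A' A) \<le> 1/2" unfolding S1_def by auto
lemma S2_norm: "cmod (S2 x A' A) \<le> 1/2" unfolding S2_def by auto
lemma S3_norm: "cmod (S3 x A' A) \<le> 1/2" unfolding S3_def by auto

lemma S1_herm: "cnj (S1 x A A') = S1 x A' A" unfolding S1_def by auto
lemma S2_herm: "cnj (S2 x A A') = S2 x A' A" unfolding S2_def by auto
lemma S3_herm: "cnj (S3 x A A') = S3 x A' A" unfolding S3_def by auto

lemma finite_spin[simp]: "finite (spin_basis L d)" by (simp add: spin_basis_def sites_def)

lemma rc_S:
  fixes S :: "nat \<Rightarrow> nat set op"
  assumes supp: "\<And>x A' A. S x A' A \<noteq> 0 \<Longrightarrow> A = flip x A' \<and> A' = flip x A"
    and nrm: "\<And>x A' A. cmod (S x A' A) \<le> 1/2"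
  shows "rowb (spin_basis L d) (S x) (1/2) \<and> colb (spin_basis L d) (S x) (1/2)"
proof
  show "rowb (spin_basis L d) (S x) (1/2)"
    by (rule rowb_single[where p = "flip x"], simp, use supp in blast, use nrm in blast, simp)
  show "colb (spin_basis L d) (S x) (1/2)"
    by (rule colb_single[where q = "flip x"], simp, use supp in blast, use nrm in blast, simp)
qed

lemma rc_S3: "rowb (spin_basis L d) (S3 x) (1/2) \<and> colb (spin_basis L d) (S3 x) (1/2)"
proof
  show "rowb (spin_basis L d) (S3 x) (1/2)"
    by (rule rowb_single[where p = "id"], simp, use S3_supp in force, use S3_norm in blast, simp)
  show "colb (spin_basis L d) (S3 x) (1/2)"
    by (rule colb_single[where q = "id"], simp, use S3_supp in force, use S3_norm in blast, simp)
qed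

lemma rc_opid: "rowb B opid 1 \<and> colb B opid 1" if "finite B"
proof
  show "rowb B opid 1" by (rule rowb_single[where p = "id"], fact, auto simp: opid_def)
  show "colb B opid 1" by (rule colb_single[where q = "id"], fact, auto simp: opid_def)
qed

definition Xop :: "nat \<Rightarrow> nat \<Rightarrow> nat \<Rightarrow> nat \<Rightarrow> nat set op" where
  "Xop L d x y = (\<lambda>i j. SdotS L d x y i j - (1/4) * opid i j)"

lemma rc_X: "rowb (spin_basis L d) (Xop L d x y) 1 \<and> colb (spin_basis L d) (Xop L d x y) 1"
proof -
  let ?B = "spin_basis L d"
  have r1: "rowb ?B (S1 z) (1/2)" "colb ?B (S1 z) (1/2)" for z using rc_S[where S=S1, OF S1_supp S1_norm] by auto
  have r2: "rowb ?B (S2 z) (1/2)" "colb ?B (S2 z) (1/2)" for z using rc_S[where S=S2, OF S2_supp S2_norm] by auto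
  have r3: "rowb ?B (S3 z) (1/2)" "colb ?B (S3 z) (1/2)" for z using rc_S3 by auto
  have rs: "rowb ?B (SdotS L d x y) (1/2 * (1/2) + 1/2 * (1/2) + 1/2 * (1/2))"
    unfolding SdotS_def
    by (intro rowb_add rowb_mul r1 r2 r3, auto)
  have cs: "colb ?B (SdotS L d x y) (1/2 * (1/2) + 1/2 * (1/2) + 1/2 * (1/2))"
    unfolding SdotS_def
    by (intro colb_add colb_mul r1 r2 r3, auto)
  have ro: "rowb ?B (\<lambda>i j. (1/4) * opid i j) (cmod (1/4) * 1)"
    by (rule rowb_scale, use rc_opid[of ?B] in auto)
  have co: "colb ?B (\<lambda>i j. (1/4) * opid i j) (cmod (1/4) * 1)"
    by (rule colb_scale, use rc_opid[of ?B] in auto)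
  show ?thesis unfolding Xop_def
    using rowb_diff[OF rs ro] colb_diff[OF cs co]
    by (auto elim: rowb_mono colb_mono)
qed


definition ovs :: "nat \<Rightarrow> nat \<Rightarrow> nat set \<Rightarrow> real" where
  "ovs L d A = (\<Sum>x\<in>sites L d. etar L d x * (if x \<in> A then 1/2 else -1/2))"

lemma Mspin_diag: "Mspin L d A' A = (if A' = A then complex_of_real (ovs L d A) else 0)"
  unfolding Mspin_def ovs_def S3_def by (auto simp: eta_etar intro!: sum.cong)

lemma ovs_bd: "- real (L^d) / 2 \<le> ovs L d A \<and> ovs L d A \<le> real (L^d) / 2"
proof -
  have t: "\<bar>etar L d x * (if x \<in> A then 1/2 else -1/2)\<bar> \<le> 1/2" for x
    using etar_pm[of L d x] by auto
  have "\<bar>ovs L d A\<bar> \<le> (\<Sum>x\<in>sites L d. 1/2)" unfolding ovs_def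
    by (rule order.trans[OF sum_abs sum_mono], rule t)
  also have "\<dots> = real (L^d) / 2" by (simp add: sites_def)
  finally show ?thesis by linarith
qed

lemma Xop_herm: "cnj (Xop L d x y j i) = Xop L d y x i j"
proof -
  have m: "cnj (opmul B (S x) (S y) j i) = opmul B (S y) (S x) i j"
    if h: "\<And>x A A'. cnj (S x A A') = S x A' A" for B and S :: "nat \<Rightarrow> nat set op"
    unfolding opmul_def cnj_sum using h by (simp add: mult.commute)
  show ?thesis unfolding Xop_def SdotS_def
    using m[of S1, OF S1_herm] m[of S2, OF S2_herm] m[of S3, OF S3_herm]
    by (simp add: opid_def)
qed

lemma bp_swap: "(\<Sum>(x,y)\<in>bond_pairs b. f x y) = (\<Sum>(x,y)\<in>bond_pairs b. (f y x :: complex))"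
  by (rule sum.reindex_bij_witness[of _ prod.swap prod.swap]) (auto simp: bond_pairs_def)

lemma H_Heis_Xop: "H_Heis J h L d = (\<lambda>i j. complex_of_real J * (\<Sum>b\<in>bonds L d. (1/2) * (\<Sum>(x,y)\<in>bond_pairs b. Xop L d x y i j))
     - complex_of_real h * Mspin L d i j)"
  unfolding H_Heis_def Xop_def by simp

lemma Heis_herm: "cnj (H_Heis J h L d j i) = H_Heis J h L d i j"
proof -
  have "cnj (H_Heis J h L d j i) = complex_of_real J * (\<Sum>b\<in>bonds L d. (1/2) * (\<Sum>(x,y)\<in>bond_pairs b. Xop L d y x i j))
     - complex_of_real h * Mspin L d i j"
    unfolding H_Heis_Xop cnj_sum by (simp add: case_prod_beta Xop_herm Mspin_diag)
  also have "\<dots> = H_Heis J h L d i j"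
    unfolding H_Heis_Xop by (subst bp_swap, simp)
  finally show ?thesis .
qed

lemma RQ_Heis: "RQ B (H_Heis J h L d) v = complex_of_real J * (\<Sum>b\<in>bonds L d. (1/2) * (\<Sum>(x,y)\<in>bond_pairs b. RQ B (Xop L d x y) v))
     - complex_of_real h * RQ B (Mspin L d) v"
  unfolding H_Heis_Xop RQ_diff RQ_scale RQ_sum case_prod_beta by simp

lemma bond_count:
  assumes L: "L > 0"
  shows "(\<Sum>b\<in>bonds L d. real (card (bond_pairs b))) \<le> 2 * d * real (L^d)"
proof -
  have "(\<Sum>b\<in>bonds L d. \<Sum>(x,y)\<in>bond_pairs b. (1::real)) \<le> 2 * d * (\<Sum>x\<in>sites L d. (1::real))"
    by (rule bond_sum[OF L], simp)
  thus ?thesis by (simp add: sites_def)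
qed

lemma Xsum_bound:
  assumes L: "L > 0" and v: "nrm (spin_basis L d) v = 1"
  shows "cmod (\<Sum>b\<in>bonds L d. (1/2) * (\<Sum>(x,y)\<in>bond_pairs b. RQ (spin_basis L d) (Xop L d x y) v)) \<le> d * real (L^d)"
proof -
  have x1: "cmod (RQ (spin_basis L d) (Xop L d x y) v) \<le> 1" for x y
    using schur[OF finite_spin conjunct1[OF rc_X] conjunct2[OF rc_X], of L d x y v] v by simp
  have "cmod (\<Sum>b\<in>bonds L d. (1/2) * (\<Sum>(x,y)\<in>bond_pairs b. RQ (spin_basis L d) (Xop L d x y) v))
      \<le> (\<Sum>b\<in>bonds L d. (1/2) * (\<Sum>(x,y)\<in>bond_pairs b. (1::real)))"
  proof (rule order.trans[OF norm_sum sum_mono])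
    fix b
    have "cmod ((1/2) * (\<Sum>(x,y)\<in>bond_pairs b. RQ (spin_basis L d) (Xop L d x y) v))
       = (1/2) * cmod (\<Sum>(x,y)\<in>bond_pairs b. RQ (spin_basis L d) (Xop L d x y) v)"
      by (simp add: norm_mult)
    also have "\<dots> \<le> (1/2) * (\<Sum>(x,y)\<in>bond_pairs b. (1::real))"
      by (intro mult_left_mono order.trans[OF norm_sum sum_mono], auto simp: x1)
    finally show "cmod ((1/2) * (\<Sum>(x,y)\<in>bond_pairs b. RQ (spin_basis L d) (Xop L d x y) v))
       \<le> (1/2) * (\<Sum>(x,y)\<in>bond_pairs b. (1::real))" .
  qed
  also have "\<dots> = (1/2) * (\<Sum>b\<in>bonds L d. real (card (bond_pairs b)))"
    by (simp add: sum_distrib_left)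
  also have "\<dots> \<le> (1/2) * (2 * d * real (L^d))" using bond_count[OF L, of d] by simp
  finally show ?thesis by simp
qed


lemma heis_bound:
  assumes L: "L > 0" and J: "J \<ge> 0" and h: "h > 0" and beta: "\<beta> > 0" and a: "a > 0"
  shows "\<exists>g. gibbs (spin_basis L d) (H_Heis J h L d) \<beta> (Mspin L d) = complex_of_real g \<and> g \<le> real (L^d) / 2 \<and>
     real (L^d) / 2 - g \<le> (2 * J * d * real (L^d) + a) / h + 2 ^ (L^d) * real (L^d) * exp (- \<beta> * a)"
proof -
  define B where "B = spin_basis L d"
  define N where "N = real (L^d)"
  define AN where "AN = {x \<in> sites L d. etar L d x = 1}"
  define w where "w A = (if A = AN then 1 else 0 :: complex)" for A
  have ANB: "AN \<in> B" unfolding AN_def B_def spin_basis_def by auto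
  have cardB: "card B = 2 ^ (L^d)" unfolding B_def spin_basis_def by (simp add: card_Pow sites_def)
  have Mre: "RQ B (Mspin L d) v = complex_of_real (\<Sum>i\<in>B. ovs L d i * (cmod (v i))^2)" for v
    by (rule RQ_diag, auto simp: Mspin_diag B_def)
  have wn: "nrm B w = 1"
  proof -
    have "nrm B w = (\<Sum>i\<in>B. if i = AN then 1 else 0)" unfolding nrm_def
      by (intro sum.cong refl, simp add: w_def)
    thus ?thesis using ANB by (simp add: B_def)
  qed
  have ovsAN: "ovs L d AN = N / 2"
  proof -
    have "ovs L d AN = (\<Sum>x\<in>sites L d. 1/2)" unfolding ovs_def AN_def
      by (intro sum.cong refl, use etar_pm in auto)
    thus ?thesis by (simp add: N_def sites_def)
  qed
  have RQMw: "RQ B (Mspin L d) w = complex_of_real (N/2)"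
  proof -
    have "(\<Sum>i\<in>B. ovs L d i * (cmod (w i))^2) = (\<Sum>i\<in>B. if i = AN then ovs L d AN else 0)"
      by (intro sum.cong refl, simp add: w_def)
    also have "\<dots> = N / 2" using ANB ovsAN by (simp add: B_def)
    finally show ?thesis using Mre[of w] by (simp only:)
  qed
  have XB: "cmod (\<Sum>b\<in>bonds L d. (1/2) * (\<Sum>(x,y)\<in>bond_pairs b. RQ B (Xop L d x y) v)) \<le> d * N"
    if "nrm B v = 1" for v using Xsum_bound[OF L] that unfolding B_def N_def by blast
  have reH: "Re (RQ B (H_Heis J h L d) v) = J * Re (\<Sum>b\<in>bonds L d. (1/2) * (\<Sum>(x,y)\<in>bond_pairs b. RQ B (Xop L d x y) v))
      - h * Re (RQ B (Mspin L d) v)" for v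
    unfolding RQ_Heis by simp
  have low: "\<forall>v. nrm B v = 1 \<longrightarrow> Re (RQ B (H_Heis J h L d) v) \<ge> - h * Re (RQ B (Mspin L d) v) + (- J * d * N)"
  proof (intro allI impI)
    fix v assume v: "nrm B v = 1"
    let ?X = "\<Sum>b\<in>bonds L d. (1/2) * (\<Sum>(x,y)\<in>bond_pairs b. RQ B (Xop L d x y) v)"
    have "- (d * N) \<le> Re ?X" using XB[OF v] abs_Re_le_cmod[of ?X] by linarith
    hence "J * (- (d * N)) \<le> J * Re ?X" using J by (rule mult_left_mono)
    thus "Re (RQ B (H_Heis J h L d) v) \<ge> - h * Re (RQ B (Mspin L d) v) + (- J * d * N)"
      unfolding reH by (simp add: algebra_simps)
  qed
  have up: "Re (RQ B (H_Heis J h L d) w) \<le> J * d * N - h * (N / 2)"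
  proof -
    let ?X = "\<Sum>b\<in>bonds L d. (1/2) * (\<Sum>(x,y)\<in>bond_pairs b. RQ B (Xop L d x y) w)"
    have "Re ?X \<le> d * N" using XB[OF wn] abs_Re_le_cmod[of ?X] by linarith
    hence "J * Re ?X \<le> J * (d * N)" using J by (rule mult_left_mono)
    thus ?thesis unfolding reH RQMw by simp
  qed
  have herm: "\<forall>i\<in>B. \<forall>j\<in>B. H_Heis J h L d i j = cnj (H_Heis J h L d j i)"
    using Heis_herm by metis
  have obd: "\<forall>i\<in>B. N / 2 - N \<le> ovs L d i \<and> ovs L d i \<le> N / 2"
  proof
    fix i assume "i \<in> B"
    have "N / 2 - N = - N / 2" by simp
    thus "N / 2 - N \<le> ovs L d i \<and> ovs L d i \<le> N / 2" using ovs_bd[of L d i] unfolding N_def by simp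
  qed
  obtain g where g: "gibbs B (H_Heis J h L d) \<beta> (Mspin L d) = complex_of_real g" "g \<le> N / 2"
    "N / 2 - g \<le> ((J * d * N - h * (N / 2)) - (- J * d * N) + h * (N / 2) + a) / h + real (card B) * N * exp (- \<beta> * a)"
    using gibbs_bound[of B "H_Heis J h L d" "Mspin L d" "ovs L d" "N/2" N \<beta> h a "- J * d * N" w "J * d * N - h * (N / 2)",
      OF _ _ herm _ _ obd beta h a low wn up]
    by (auto simp: B_def spin_basis_def Mspin_diag)
  have "((J * d * N - h * (N / 2)) - (- J * d * N) + h * (N / 2) + a) = 2 * J * d * N + a" by simp
  thus ?thesis using g cardB unfolding B_def N_def by (simp add: mult_ac)
qed

abbreviation FB where "FB L d \<equiv> fock_basis L d"

lemma opmul_single: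
  assumes "\<And>k. C k j \<noteq> 0 \<Longrightarrow> k = p" and "finite F"
  shows "opmul F A C i j = (if p \<in> F then A i p * C p j else 0)"
proof -
  have "opmul F A C i j = (\<Sum>k\<in>F. if k = p then A i k * C k j else 0)"
    unfolding opmul_def using assms(1) by (intro sum.cong refl, auto)
  thus ?thesis using assms(2) by (simp add: sum.delta)
qed

lemma ann_supp: "ann m k S \<noteq> 0 \<Longrightarrow> k = S - {m}"
  unfolding ann_def by (auto split: if_splits)

lemma ann_norm: "cmod (ann m k S) \<le> 1"
  unfolding ann_def by (auto simp: norm_power)

lemma ann_sq: "cnj (ann m k S) * ann m k S = (if m \<in> S \<and> k = S - {m} then 1 else 0)"
  unfolding ann_def by (auto simp: power_mult_distrib[symmetric])

lemma finite_fock[simp]: "finite (fock_basis L d)" by (simp add: fock_basis_def)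

lemma fock_minus: "S \<in> fock_basis L d \<Longrightarrow> S - {m} \<in> fock_basis L d"
  by (auto simp: fock_basis_def)

lemma numop_eq:
  assumes S: "S \<in> fock_basis L d"
  shows "numop L d x \<sigma> S' S = (if S' = S \<and> mode x \<sigma> \<in> S then 1 else 0)"
proof -
  let ?m = "mode x \<sigma>"
  have "numop L d x \<sigma> S' S = cnj (ann ?m (S - {?m}) S') * ann ?m (S - {?m}) S"
    unfolding numop_def cre_def using fock_minus[OF S]
    by (subst opmul_single[where p = "S - {?m}"], auto dest: ann_supp)
  also have "\<dots> = (if S' = S \<and> ?m \<in> S then 1 else 0)"
  proof (cases "?m \<in> S \<and> ?m \<in> S' \<and> S - {?m} = S' - {?m}")
    case True
    hence "S' = S" by (metis insert_Diff)
    thus ?thesis using True ann_sq[of ?m "S - {?m}" S] by simp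
  next
    case False
    hence "ann ?m (S - {?m}) S' = 0 \<or> ann ?m (S - {?m}) S = 0" unfolding ann_def by auto
    thus ?thesis using False by auto
  qed
  finally show ?thesis .
qed

definition hop :: "nat \<Rightarrow> nat \<Rightarrow> nat \<Rightarrow> nat \<Rightarrow> bool \<Rightarrow> nat set op" where
  "hop L d x y \<sigma> = opmul (fock_basis L d) (cre (mode x \<sigma>)) (ann (mode y \<sigma>))"

lemma hop_eq:
  assumes S: "S \<in> fock_basis L d"
  shows "hop L d x y \<sigma> S' S = cnj (ann (mode x \<sigma>) (S - {mode y \<sigma>}) S') * ann (mode y \<sigma>) (S - {mode y \<sigma>}) S"
  unfolding hop_def cre_def using fock_minus[OF S]
  by (subst opmul_single[where p = "S - {mode y \<sigma>}"], auto dest: ann_supp)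

lemma hop_norm: "S \<in> fock_basis L d \<Longrightarrow> cmod (hop L d x y \<sigma> S' S) \<le> 1"
  unfolding hop_eq norm_mult complex_mod_cnj
  using ann_norm mult_le_one by (metis norm_ge_zero)

lemma hop_supp:
  assumes S: "S \<in> fock_basis L d" and nz: "hop L d x y \<sigma> S' S \<noteq> 0"
  shows "mode y \<sigma> \<in> S \<and> mode x \<sigma> \<in> S' \<and> S' - {mode x \<sigma>} = S - {mode y \<sigma>}"
  using nz unfolding hop_eq[OF S] ann_def by (auto split: if_splits)

lemma hop_herm: "cnj (hop L d x y \<sigma> S S') = hop L d y x \<sigma> S' S"
  unfolding hop_def opmul_def cre_def cnj_sum by (simp add: mult.commute)

lemma mode_inj: "mode x \<sigma> = mode y \<tau> \<longleftrightarrow> x = y \<and> \<sigma> = \<tau>"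
  unfolding mode_def by (cases \<sigma>; cases \<tau>; auto; presburger)

lemma Top_hop: "Top t L d = (\<lambda>i j. - complex_of_real t * (\<Sum>b\<in>bonds L d. \<Sum>(x,y)\<in>bond_pairs b. \<Sum>\<sigma>\<in>(UNIV::bool set). hop L d x y \<sigma> i j))"
  unfolding Top_def hop_def by simp


definition dbl :: "nat \<Rightarrow> nat \<Rightarrow> nat set \<Rightarrow> real" where
  "dbl L d S = (\<Sum>x\<in>sites L d. if mode x True \<in> S \<and> mode x False \<in> S then 1 else 0)"

definition Kx :: "nat \<Rightarrow> nat set \<Rightarrow> real" where
  "Kx x S = (if (mode x True \<in> S) = (mode x False \<in> S) then 1 else 0)"

definition ovh :: "nat \<Rightarrow> nat \<Rightarrow> nat set \<Rightarrow> real" where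
  "ovh L d S = (\<Sum>x\<in>sites L d. etar L d x * (1/2) *
      ((if mode x True \<in> S then 1 else 0) - (if mode x False \<in> S then 1 else 0)))"

lemma Dop_eq:
  assumes S: "S \<in> fock_basis L d"
  shows "Dop L d S' S = (if S' = S then complex_of_real (dbl L d S) else 0)"
proof -
  have e: "opmul (fock_basis L d) (numop L d x True) (numop L d x False) S' S =
        (if S' = S \<and> mode x True \<in> S \<and> mode x False \<in> S then 1 else 0)" for x
    using S by (subst opmul_single[where p = S], auto simp: numop_eq split: if_splits)
  show ?thesis unfolding Dop_def e dbl_def by (auto intro!: sum.cong)
qed

lemma Mop_eq:
  assumes S: "S \<in> fock_basis L d"
  shows "Mop L d S' S = (if S' = S then complex_of_real (ovh L d S) else 0)"
  unfolding Mop_def ovh_def using S by (auto simp: numop_eq eta_etar intro!: sum.cong)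

lemma ovh_bd: "- real (L^d) / 2 \<le> ovh L d S \<and> ovh L d S \<le> real (L^d) / 2"
proof -
  have t: "\<bar>etar L d x * (1/2) * ((if mode x True \<in> S then 1 else 0) - (if mode x False \<in> S then 1 else 0))\<bar> \<le> 1/2" for x
    using etar_pm[of L d x] by auto
  have "\<bar>ovh L d S\<bar> \<le> (\<Sum>x\<in>sites L d. 1/2)" unfolding ovh_def
    by (rule order.trans[OF sum_abs sum_mono], rule t)
  also have "\<dots> = real (L^d) / 2" by (simp add: sites_def)
  finally show ?thesis by linarith
qed

lemma sum_pairs: "(\<Sum>m<2*(n::nat). f m) = (\<Sum>x<n. f (2*x) + (f (2*x+1) :: real))"
  by (induction n, auto simp: sum.distrib)

lemma card_occ:
  assumes "S \<subseteq> {0..<2 * n}"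
  shows "real (card S) = (\<Sum>x<n. (if mode x True \<in> S then 1 else 0) + (if mode x False \<in> S then 1 else 0))"
proof -
  have "card S = card ({..<2*n} \<inter> S)" using assms by (metis atLeast0LessThan inf.absorb_iff2)
  also have "real \<dots> = (\<Sum>m<2*n. if m \<in> S then 1 else 0)"
    by (simp add: sum.If_cases)
  also have "\<dots> = (\<Sum>x<n. (if 2*x \<in> S then 1 else 0) + (if 2*x+1 \<in> S then 1 else 0))"
    by (rule sum_pairs)
  finally show ?thesis by (simp add: mode_def)
qed

lemma half_fill:
  assumes S: "S \<in> hf_basis L d"
  shows "(\<Sum>x\<in>sites L d. Kx x S) = 2 * dbl L d S"
proof -
  let ?N = "L^d"
  have sub: "S \<subseteq> {0..<2 * ?N}" and c: "card S = ?N" using S by (auto simp: hf_basis_def fock_basis_def)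
  have "real ?N = (\<Sum>x<?N. (if mode x True \<in> S then 1 else 0) + (if mode x False \<in> S then 1 else 0))"
    using card_occ[OF sub] c by simp
  hence "(\<Sum>x\<in>sites L d. 1 - ((if mode x True \<in> S then 1 else 0) + (if mode x False \<in> S then 1 else 0))) = (0::real)"
    by (simp add: sum_subtractf sites_def atLeast0LessThan)
  moreover have "(\<Sum>x\<in>sites L d. Kx x S) - 2 * dbl L d S =
      (\<Sum>x\<in>sites L d. 1 - ((if mode x True \<in> S then 1 else 0) + (if mode x False \<in> S then 1 else 0)))"
    unfolding dbl_def Kx_def sum_distrib_left sum_subtractf[symmetric] by (intro sum.cong refl, auto)
  ultimately show ?thesis by simp
qed

lemma Kx_bd: "0 \<le> Kx x S \<and> Kx x S \<le> 1" unfolding Kx_def by auto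

lemma hop_K:
  assumes S: "S \<in> fock_basis L d" and nz: "hop L d x y \<sigma> S' S \<noteq> 0" and xy: "x \<noteq> y"
  shows "Kx x S' + Kx x S \<ge> 1"
proof -
  let ?mx = "mode x \<sigma>" and ?my = "mode y \<sigma>" and ?m' = "mode x (\<not> \<sigma>)"
  have h: "?my \<in> S" "?mx \<in> S'" "S' - {?mx} = S - {?my}" using hop_supp[OF S nz] by auto
  have d1: "?mx \<noteq> ?my" "?m' \<noteq> ?mx" "?m' \<noteq> ?my" using xy by (auto simp: mode_inj)
  have mxS: "?mx \<notin> S" using h d1 by blast
  have eq: "(?m' \<in> S) = (?m' \<in> S')" using h d1 by blast
  show ?thesis
  proof (cases "?m' \<in> S")
    case True
    hence "Kx x S' = 1" using eq h unfolding Kx_def by (cases \<sigma>, auto)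
    thus ?thesis using Kx_bd[of x S] by simp
  next
    case False
    hence "Kx x S = 1" using mxS unfolding Kx_def by (cases \<sigma>, auto)
    thus ?thesis using Kx_bd[of x S'] by simp
  qed
qed

lemma hf_sub: "S \<in> hf_basis L d \<Longrightarrow> S \<in> fock_basis L d" by (simp add: hf_basis_def)

lemma finite_hf[simp]: "finite (hf_basis L d)" by (simp add: hf_basis_def)

lemma rc_hop: "rowb (hf_basis L d) (hop L d x y \<sigma>) 1 \<and> colb (hf_basis L d) (hop L d x y \<sigma>) 1"
proof
  show "rowb (hf_basis L d) (hop L d x y \<sigma>) 1"
  proof (rule rowb_single[where p = "\<lambda>S'. insert (mode y \<sigma>) (S' - {mode x \<sigma>})"])
    show "\<forall>i\<in>hf_basis L d. \<forall>j\<in>hf_basis L d. hop L d x y \<sigma> i j \<noteq> 0 \<longrightarrow> j = insert (mode y \<sigma>) (i - {mode x \<sigma>})"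
      using hop_supp[OF hf_sub] by (metis insert_Diff)
    show "\<forall>i\<in>hf_basis L d. \<forall>j\<in>hf_basis L d. cmod (hop L d x y \<sigma> i j) \<le> 1"
      using hop_norm[OF hf_sub] by blast
  qed auto
  show "colb (hf_basis L d) (hop L d x y \<sigma>) 1"
  proof (rule colb_single[where q = "\<lambda>S. insert (mode x \<sigma>) (S - {mode y \<sigma>})"])
    show "\<forall>i\<in>hf_basis L d. \<forall>j\<in>hf_basis L d. hop L d x y \<sigma> i j \<noteq> 0 \<longrightarrow> i = insert (mode x \<sigma>) (j - {mode y \<sigma>})"
      using hop_supp[OF hf_sub] by (metis insert_Diff)
    show "\<forall>i\<in>hf_basis L d. \<forall>j\<in>hf_basis L d. cmod (hop L d x y \<sigma> i j) \<le> 1"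
      using hop_norm[OF hf_sub] by blast
  qed auto
qed


lemma Top_herm: "cnj (Top t L d j i) = Top t L d i j"
proof -
  have "cnj (Top t L d j i) = - complex_of_real t * (\<Sum>b\<in>bonds L d. \<Sum>(x,y)\<in>bond_pairs b. \<Sum>\<sigma>\<in>(UNIV::bool set). hop L d y x \<sigma> i j)"
    unfolding Top_hop cnj_sum by (simp add: case_prod_beta hop_herm)
  also have "\<dots> = Top t L d i j"
    unfolding Top_hop by (subst bp_swap, simp)
  finally show ?thesis .
qed

lemma Hub_herm:
  assumes i: "i \<in> hf_basis L d" and j: "j \<in> hf_basis L d"
  shows "H_Hub U t h L d i j = cnj (H_Hub U t h L d j i)"
  unfolding H_Hub_def using Top_herm[of t L d] Dop_eq[OF hf_sub[OF i]] Dop_eq[OF hf_sub[OF j]]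
    Mop_eq[OF hf_sub[OF i]] Mop_eq[OF hf_sub[OF j]]
  by (simp add: Top_herm)

lemma RQ_Hub: "RQ B (H_Hub U t h L d) v = complex_of_real U * RQ B (Dop L d) v
   - complex_of_real t * (\<Sum>b\<in>bonds L d. \<Sum>(x,y)\<in>bond_pairs b. \<Sum>\<sigma>\<in>(UNIV::bool set). RQ B (hop L d x y \<sigma>) v)
   - complex_of_real h * RQ B (Mop L d) v"
proof -
  have "H_Hub U t h L d = (\<lambda>i j. (complex_of_real U * Dop L d i j + Top t L d i j) - complex_of_real h * Mop L d i j)"
    unfolding H_Hub_def by simp
  hence "RQ B (H_Hub U t h L d) v = complex_of_real U * RQ B (Dop L d) v + RQ B (Top t L d) v - complex_of_real h * RQ B (Mop L d) v"
    by (simp add: RQ_diff RQ_add RQ_scale)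
  moreover have "RQ B (Top t L d) v = - complex_of_real t * (\<Sum>b\<in>bonds L d. \<Sum>(x,y)\<in>bond_pairs b. \<Sum>\<sigma>\<in>(UNIV::bool set). RQ B (hop L d x y \<sigma>) v)"
    unfolding Top_hop RQ_scale RQ_sum case_prod_beta by simp
  ultimately show ?thesis by simp
qed

lemma RQ_D: "RQ (hf_basis L d) (Dop L d) v = complex_of_real (\<Sum>S\<in>hf_basis L d. dbl L d S * (cmod (v S))^2)"
  by (rule RQ_diag, auto simp: Dop_eq[OF hf_sub])

lemma RQ_M: "RQ (hf_basis L d) (Mop L d) v = complex_of_real (\<Sum>S\<in>hf_basis L d. ovh L d S * (cmod (v S))^2)"
  by (rule RQ_diag, auto simp: Mop_eq[OF hf_sub])

lemma hop_bound:
  assumes xy: "x \<noteq> y" and dl: "dl > 0"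
  shows "cmod (RQ (hf_basis L d) (hop L d x y \<sigma>) v) \<le> dl * nrm (hf_basis L d) v + (\<Sum>S\<in>hf_basis L d. Kx x S * (cmod (v S))^2) / dl"
  by (rule wschur[OF finite_hf conjunct1[OF rc_hop] conjunct2[OF rc_hop] dl],
      use Kx_bd in blast, use hop_K[OF hf_sub _ xy] in force)


lemma norm_bsum:
  assumes "\<forall>b\<in>Bs. \<forall>p\<in>P b. cmod (F p) \<le> G p"
  shows "cmod (\<Sum>b\<in>Bs. \<Sum>p\<in>P b. F p) \<le> (\<Sum>b\<in>Bs. \<Sum>p\<in>P b. G p)"
  by (rule order.trans[OF norm_sum sum_mono], rule order.trans[OF norm_sum sum_mono], use assms in auto)

lemma hub_low:
  assumes L: "L > 0" and U: "U > 0" and d: "d \<ge> 1" and t: "t \<noteq> 0"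
    and v: "nrm (hf_basis L d) v = 1"
  shows "Re (RQ (hf_basis L d) (H_Hub U t h L d) v) \<ge>
         - h * Re (RQ (hf_basis L d) (Mop L d) v) - 32 * d^2 * t^2 * real (L^d) / U"
proof -
  define B where "B = hf_basis L d"
  define N where "N = real (L^d)"
  define dl where "dl = 8 * d * \<bar>t\<bar> / U"
  have dl: "dl > 0" unfolding dl_def using U d t by simp
  define RD where "RD = (\<Sum>S\<in>B. dbl L d S * (cmod (v S))^2)"
  define Q where "Q x = (\<Sum>S\<in>B. Kx x S * (cmod (v S))^2)" for x
  have Q0: "Q x \<ge> 0" for x unfolding Q_def using Kx_bd by (intro sum_nonneg mult_nonneg_nonneg, auto)
  have sumQ: "(\<Sum>x\<in>sites L d. Q x) = 2 * RD"
  proof -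
    have "(\<Sum>x\<in>sites L d. Q x) = (\<Sum>S\<in>B. (\<Sum>x\<in>sites L d. Kx x S) * (cmod (v S))^2)"
      unfolding Q_def by (subst sum.swap, simp add: sum_distrib_right)
    also have "\<dots> = (\<Sum>S\<in>B. 2 * dbl L d S * (cmod (v S))^2)"
      unfolding B_def by (intro sum.cong refl, simp add: half_fill)
    finally show ?thesis unfolding RD_def by (simp add: sum_distrib_left mult.assoc)
  qed
  define Tsum where "Tsum = (\<Sum>b\<in>bonds L d. \<Sum>(x,y)\<in>bond_pairs b. \<Sum>\<sigma>\<in>(UNIV::bool set). RQ B (hop L d x y \<sigma>) v)"
  have Tb: "cmod Tsum \<le> (\<Sum>b\<in>bonds L d. \<Sum>(x,y)\<in>bond_pairs b. 2 * (dl + Q x / dl))"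
    unfolding Tsum_def
  proof (rule norm_bsum, intro ballI)
    fix b p assume b: "b \<in> bonds L d" and p: "p \<in> bond_pairs b"
    obtain x y where pxy: "p = (x,y)" by (cases p)
    have xy: "x \<noteq> y" using bp_nbr[OF b p[unfolded pxy]] by simp
    have "cmod (\<Sum>\<sigma>\<in>(UNIV::bool set). RQ B (hop L d x y \<sigma>) v) \<le> (\<Sum>\<sigma>\<in>(UNIV::bool set). dl + Q x / dl)"
      by (rule order.trans[OF norm_sum sum_mono], use hop_bound[OF xy dl, of L d _ v] v in \<open>simp add: B_def Q_def\<close>)
    thus "cmod ((\<lambda>(x,y). \<Sum>\<sigma>\<in>(UNIV::bool set). RQ B (hop L d x y \<sigma>) v) p) \<le> (\<lambda>(x,y). 2 * (dl + Q x / dl)) p"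
      unfolding pxy by simp
  qed
  also have "\<dots> \<le> 2 * d * (\<Sum>x\<in>sites L d. 2 * (dl + Q x / dl))"
    by (rule bond_sum[OF L], use Q0 dl in \<open>auto intro!: add_nonneg_nonneg\<close>)
  also have "\<dots> = 4 * d * (N * dl + 2 * RD / dl)"
  proof -
    have e1: "(\<Sum>x\<in>sites L d. 2 * (dl + Q x / dl)) = 2 * (\<Sum>x\<in>sites L d. dl) + 2 * (\<Sum>x\<in>sites L d. Q x) / dl"
      by (simp add: sum.distrib sum_distrib_left sum_divide_distrib)
    have e2: "(\<Sum>x\<in>sites L d. dl) = N * dl" by (simp add: N_def sites_def)
    show ?thesis unfolding e1 e2 sumQ by (simp add: algebra_simps)
  qed
  finally have Tb: "cmod Tsum \<le> 4 * d * (N * dl + 2 * RD / dl)" .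
  have reH: "Re (RQ B (H_Hub U t h L d) v) = U * RD - t * Re Tsum - h * Re (RQ B (Mop L d) v)"
  proof -
    have RQD': "RQ B (Dop L d) v = complex_of_real RD" unfolding B_def RD_def by (rule RQ_D)
    have "RQ B (H_Hub U t h L d) v = complex_of_real U * complex_of_real RD - complex_of_real t * Tsum
        - complex_of_real h * RQ B (Mop L d) v"
      unfolding RQ_Hub RQD' Tsum_def by simp
    thus ?thesis by simp
  qed
  have "t * Re Tsum \<le> \<bar>t\<bar> * \<bar>Re Tsum\<bar>" by (simp add: abs_mult[symmetric])
  also have "\<dots> \<le> \<bar>t\<bar> * cmod Tsum" by (rule mult_left_mono[OF abs_Re_le_cmod], simp)
  also have "\<dots> \<le> \<bar>t\<bar> * (4 * d * (N * dl + 2 * RD / dl))" using Tb by (simp add: mult_left_mono)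
  also have "\<dots> = 32 * d^2 * t^2 * N / U + U * RD"
    unfolding dl_def using U d t by (simp add: field_simps power2_eq_square)
  finally have "t * Re Tsum \<le> 32 * d^2 * t^2 * N / U + U * RD" .
  thus ?thesis using reH unfolding B_def N_def by simp
qed


lemma RQ_ind:
  assumes fin: "finite B" and s: "s \<in> B"
  shows "RQ B A (\<lambda>i. if i = s then 1 else 0) = A s s"
proof -
  have "RQ B A (\<lambda>i. if i = s then 1 else 0) = (\<Sum>i\<in>B. if i = s then (\<Sum>j\<in>B. if j = s then A s s else 0) else 0)"
    unfolding RQ_def by (intro sum.cong refl, auto intro!: sum.cong)
  thus ?thesis using fin s by simp
qed

lemma nrm_ind:
  assumes fin: "finite B" and s: "s \<in> B"
  shows "nrm B (\<lambda>i. if i = s then 1 else 0) = 1"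
proof -
  have "nrm B (\<lambda>i. if i = s then 1 else 0) = (\<Sum>i\<in>B. if i = s then 1 else 0)"
    unfolding nrm_def by (intro sum.cong refl, auto)
  thus ?thesis using fin s by simp
qed

definition neel :: "nat \<Rightarrow> nat \<Rightarrow> nat set" where
  "neel L d = (\<lambda>x. mode x (etar L d x = 1)) ` sites L d"

lemma neel_mem: "mode x \<sigma> \<in> neel L d \<longleftrightarrow> x \<in> sites L d \<and> \<sigma> = (etar L d x = 1)"
  unfolding neel_def by (auto simp: mode_inj)

lemma neel_hf: "neel L d \<in> hf_basis L d"
proof -
  have sub: "neel L d \<subseteq> {0..<2 * L^d}" unfolding neel_def sites_def mode_def by auto
  have "inj_on (\<lambda>x. mode x (etar L d x = 1)) (sites L d)" by (auto intro!: inj_onI simp: mode_inj)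
  hence "card (neel L d) = L^d" unfolding neel_def by (simp add: card_image sites_def)
  thus ?thesis using sub by (simp add: hf_basis_def fock_basis_def)
qed

lemma neel_H: "H_Hub U t h L d (neel L d) (neel L d) = - complex_of_real h * complex_of_real (real (L^d) / 2)"
proof -
  let ?S = "neel L d"
  have S: "?S \<in> fock_basis L d" using hf_sub[OF neel_hf] .
  have "dbl L d ?S = 0" unfolding dbl_def by (intro sum.neutral, auto simp: neel_mem)
  hence D: "Dop L d ?S ?S = 0" by (simp add: Dop_eq[OF S])
  have "ovh L d ?S = (\<Sum>x\<in>sites L d. 1/2)" unfolding ovh_def
    by (intro sum.cong refl, use etar_pm in \<open>auto simp: neel_mem\<close>)
  hence ov: "ovh L d ?S = real (L^d) / 2" by (simp add: sites_def)
  have M: "Mop L d ?S ?S = complex_of_real (real (L^d) / 2)" unfolding Mop_eq[OF S] ov by simp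
  have hz: "hop L d x y \<sigma> ?S ?S = 0" if "x \<noteq> y" for x y \<sigma>
  proof (rule ccontr)
    assume "hop L d x y \<sigma> ?S ?S \<noteq> 0"
    from hop_supp[OF S this] have "mode x \<sigma> \<in> ?S" "?S - {mode x \<sigma>} = ?S - {mode y \<sigma>}" by auto
    moreover have "mode x \<sigma> \<noteq> mode y \<sigma>" using that by (simp add: mode_inj)
    ultimately show False by blast
  qed
  have "(\<Sum>b\<in>bonds L d. \<Sum>(x,y)\<in>bond_pairs b. \<Sum>\<sigma>\<in>(UNIV::bool set). hop L d x y \<sigma> ?S ?S) = 0"
  proof (intro sum.neutral ballI)
    fix b p assume b: "b \<in> bonds L d" and p: "p \<in> bond_pairs b"
    obtain x y where pxy: "p = (x,y)" by (cases p)
    have "x \<noteq> y" using bp_nbr[OF b p[unfolded pxy]] by simp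
    thus "(\<lambda>(x,y). \<Sum>\<sigma>\<in>(UNIV::bool set). hop L d x y \<sigma> ?S ?S) p = 0" unfolding pxy using hz by simp
  qed
  hence T: "Top t L d ?S ?S = 0" unfolding Top_hop by simp
  show ?thesis unfolding H_Hub_def using D M T by simp
qed

lemma hub_bound:
  assumes L: "L > 0" and U: "U > 0" and d: "d \<ge> 1" and t: "t \<noteq> 0" and h: "h > 0"
    and beta: "\<beta> > 0" and a: "a > 0"
  shows "\<exists>g. gibbs (hf_basis L d) (H_Hub U t h L d) \<beta> (Mop L d) = complex_of_real g \<and> g \<le> real (L^d) / 2 \<and>
     real (L^d) / 2 - g \<le> (32 * d^2 * t^2 * real (L^d) / U + a) / h + 4 ^ (L^d) * real (L^d) * exp (- \<beta> * a)"
proof -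
  define B where "B = hf_basis L d"
  define N where "N = real (L^d)"
  define w where "w S = (if S = neel L d then 1 else 0 :: complex)" for S
  have SB: "neel L d \<in> B" unfolding B_def by (rule neel_hf)
  have fin: "finite B" unfolding B_def by simp
  have cardB: "card B \<le> 4 ^ (L^d)"
  proof -
    have "card B \<le> card (fock_basis L d)" unfolding B_def hf_basis_def by (intro card_mono, auto)
    also have "\<dots> = 2 ^ (2 * L^d)" by (simp add: fock_basis_def card_Pow)
    also have "\<dots> = 4 ^ (L^d)" by (simp add: power_mult)
    finally show ?thesis .
  qed
  have wn: "nrm B w = 1" unfolding w_def by (rule nrm_ind[OF fin SB])
  have up: "Re (RQ B (H_Hub U t h L d) w) \<le> - h * (N / 2)"
    unfolding w_def RQ_ind[OF fin SB] neel_H N_def by simp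
  have low: "\<forall>v. nrm B v = 1 \<longrightarrow> Re (RQ B (H_Hub U t h L d) v) \<ge> - h * Re (RQ B (Mop L d) v) + (- (32 * d^2 * t^2 * N / U))"
    using hub_low[OF L U d t] unfolding B_def N_def by (simp add: algebra_simps)
  have herm: "\<forall>i\<in>B. \<forall>j\<in>B. H_Hub U t h L d i j = cnj (H_Hub U t h L d j i)"
    unfolding B_def using Hub_herm by blast
  have obd: "\<forall>i\<in>B. N / 2 - N \<le> ovh L d i \<and> ovh L d i \<le> N / 2"
  proof
    fix i assume "i \<in> B"
    have "N / 2 - N = - N / 2" by simp
    thus "N / 2 - N \<le> ovh L d i \<and> ovh L d i \<le> N / 2" using ovh_bd[of L d i] unfolding N_def by simp
  qed
  obtain g where g: "gibbs B (H_Hub U t h L d) \<beta> (Mop L d) = complex_of_real g" "g \<le> N / 2"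
    "N / 2 - g \<le> (- h * (N / 2) - (- (32 * d^2 * t^2 * N / U)) + h * (N / 2) + a) / h + real (card B) * N * exp (- \<beta> * a)"
    using gibbs_bound[of B "H_Hub U t h L d" "Mop L d" "ovh L d" "N/2" N \<beta> h a "- (32 * d^2 * t^2 * N / U)" w "- h * (N / 2)",
      OF fin _ herm _ _ obd beta h a low wn up] SB
    by (auto simp: B_def Mop_eq[OF hf_sub])
  have "real (card B) * N * exp (- \<beta> * a) \<le> 4 ^ (L^d) * N * exp (- \<beta> * a)"
  proof -
    have "real (card B) \<le> 4 ^ (L^d)" using cardB by (metis of_nat_le_iff of_nat_numeral of_nat_power)
    thus ?thesis unfolding N_def by (intro mult_right_mono, auto)
  qed
  thus ?thesis using g unfolding B_def N_def by auto
qed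

lemma lim_E: "((\<lambda>U::real. (c1 * (1/U) + c3 * ((ln 4 + sqrt U)/U)) * hi + 2 * exp(-sqrt U)) \<longlongrightarrow> 0) at_top"
proof -
  have a: "((\<lambda>U::real. 1/U) \<longlongrightarrow> 0) at_top" by real_asymp
  have b: "((\<lambda>U::real. (ln 4 + sqrt U)/U) \<longlongrightarrow> 0) at_top" by real_asymp
  have c: "((\<lambda>U::real. exp(-sqrt U)) \<longlongrightarrow> 0) at_top" by real_asymp
  have "((\<lambda>U::real. (c1 * (1/U) + c3 * ((ln 4 + sqrt U)/U)) * hi + 2 * exp(-sqrt U)) \<longlongrightarrow> (c1 * 0 + c3 * 0) * hi + 2 * 0) at_top"
    by (intro tendsto_intros a b c)
  thus ?thesis by simp
qed

lemma per_site:
  fixes N \<beta> a h hm K U l0 t g :: real and n :: nat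
  assumes N: "N = real n" and n: "n \<ge> 1" and hm: "hm > 0" and h: "hm \<le> h" and beta: "\<beta> > 0"
    and K: "K \<ge> 0" and l0: "l0 > 0" and U: "U > 0" and t: "t \<noteq> 0"
    and bJ: "\<beta> * (4 * t^2 / U) \<ge> l0"
    and a: "a = N * (ln 4 + sqrt U) / \<beta>"
    and bnd: "N / 2 - g \<le> (K * N + a) / h + 4 ^ n * N * exp (- \<beta> * a)"
  shows "N / 2 - g \<le> N * ((K + (4 * t^2 / l0) * ((ln 4 + sqrt U) / U)) / hm + exp (- sqrt U))"
proof -
  define s where "s = ln 4 + sqrt U"
  have s0: "s \<ge> 0" unfolding s_def using U by simp
  have N1: "N \<ge> 1" using N n by simp
  have hpos: "h > 0" using hm h by simp
  have e1: "(K * N + a) / h = N * ((K + s / \<beta>) / h)"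
    unfolding a s_def using beta hpos by (simp add: field_simps)
  have "(K + s / \<beta>) / h \<le> (K + s / \<beta>) / hm"
    using hm h K s0 beta by (intro divide_left_mono, auto)
  moreover have "s / \<beta> \<le> (4 * t^2 / l0) * (s / U)"
  proof -
    have "l0 * U \<le> \<beta> * (4 * t^2)" using bJ U by (simp add: field_simps)
    hence "s * (l0 * U) \<le> s * (\<beta> * (4 * t^2))" using s0 by (rule mult_left_mono)
    thus ?thesis using beta l0 U by (simp add: field_simps)
  qed
  ultimately have q1: "(K + s / \<beta>) / h \<le> (K + (4 * t^2 / l0) * (s / U)) / hm"
    using hm by (smt (verit) divide_right_mono)
  have e2: "4 ^ n * N * exp (- \<beta> * a) = N * exp (- N * sqrt U)"
  proof -
    have "\<beta> * a = N * ln 4 + N * sqrt U" unfolding a using beta by (simp add: field_simps)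
    hence "exp (- \<beta> * a) = exp (- (N * ln 4)) * exp (- N * sqrt U)" by (simp add: exp_add[symmetric])
    moreover have "(4::real) ^ n = exp (N * ln 4)" unfolding N by (simp add: exp_of_nat_mult)
    ultimately show ?thesis by (simp add: exp_minus field_simps)
  qed
  have "exp (- N * sqrt U) \<le> exp (- sqrt U)"
  proof -
    have "1 * sqrt U \<le> N * sqrt U" using N1 U by (intro mult_right_mono, auto)
    thus ?thesis by simp
  qed
  hence "N * exp (- N * sqrt U) \<le> N * exp (- sqrt U)" using N1 by simp
  hence "N / 2 - g \<le> N * ((K + (4 * t^2 / l0) * (s / U)) / hm) + N * exp (- sqrt U)"
    using bnd e1 e2 q1 N1 by (smt (verit) mult_left_mono)
  thus ?thesis unfolding s_def by (simp add: algebra_simps)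
qed


theorem theorem1p2:
  fixes d :: nat and t l0 h0 :: real and I :: "real set"
  assumes "d \<ge> 1" and "t \<noteq> 0" and "l0 > 0" and "h0 > 0"
    and "compact I" and "I \<noteq> {}" and "I \<subseteq> {0<..h0}"
  shows "\<exists>(U0::real) (\<epsilon>::real \<Rightarrow> real \<Rightarrow> real).
           (\<forall>U \<beta>. \<epsilon> U \<beta> \<ge> 0)
         \<and> (\<forall>U \<beta> (L::nat) h. U \<ge> U0 \<longrightarrow> \<beta> > 0 \<longrightarrow> \<beta> * J0 t U \<ge> l0 \<longrightarrow>
               even L \<longrightarrow> L > 0 \<longrightarrow> h \<in> I \<longrightarrow>
               cmod (m_Hub t \<beta> U h L d - m_Heis t \<beta> U h L d) \<le> \<epsilon> U \<beta>)
         \<and> ((\<lambda>U. SUP \<beta>\<in>{\<beta>. \<beta> > 0 \<and> \<beta> * J0 t U \<ge> l0}. ereal (\<epsilon> U \<beta>)) \<longlongrightarrow> 0) at_top"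
proof -
  note d = assms(1) and t = assms(2) and l0 = assms(3)
  obtain hm where hmI: "hm \<in> I" and hmle: "\<forall>h\<in>I. hm \<le> h"
    using compact_attains_inf[OF assms(5,6)] by blast
  have hm: "hm > 0" using hmI assms(7) by auto
  define c1 where "c1 = 32 * real d^2 * t^2 + 8 * real d * t^2"
  define c3 where "c3 = 8 * t^2 / l0"
  define E where "E U = (c1 * (1/U) + c3 * ((ln 4 + sqrt U)/U)) * (1/hm) + 2 * exp(-sqrt U)" for U
  define eps where "eps U (\<beta>::real) = max 0 (E U)" for U \<beta>
  have main: "cmod (m_Hub t \<beta> U h L d - m_Heis t \<beta> U h L d) \<le> E U"
    if U1: "U \<ge> 1" and beta: "\<beta> > 0" and bJ: "\<beta> * J0 t U \<ge> l0" and L: "L > 0" and hI: "h \<in> I"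
    for U \<beta> L h
  proof -
    define n where "n = L ^ d"
    define N where "N = real n"
    have U: "U > 0" using U1 by simp
    have n1: "n \<ge> 1" unfolding n_def using L by simp
    have N1: "N \<ge> 1" unfolding N_def using n1 by simp
    have hh: "hm \<le> h" using hmle hI by blast
    have h: "h > 0" using hm hh by simp
    define a where "a = N * (ln 4 + sqrt U) / \<beta>"
    have a: "a > 0" unfolding a_def using N1 beta U by (intro divide_pos_pos mult_pos_pos, auto intro: add_pos_nonneg)
    have J: "J0 t U \<ge> 0" unfolding J0_def using U by simp
    have bJ': "\<beta> * (4 * t^2 / U) \<ge> l0" using bJ unfolding J0_def by simp
    obtain g1 where g1a: "gibbs (hf_basis L d) (H_Hub U t h L d) \<beta> (Mop L d) = complex_of_real g1"
      and g1b: "g1 \<le> real (L^d) / 2"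
      and g1c: "real (L^d) / 2 - g1 \<le> (32 * real d^2 * t^2 * real (L^d) / U + a) / h + 4 ^ (L^d) * real (L^d) * exp (- \<beta> * a)"
      using hub_bound[OF L U d t h beta a] by (elim exE conjE)
    have g1: "gibbs (hf_basis L d) (H_Hub U t h L d) \<beta> (Mop L d) = complex_of_real g1"
      "g1 \<le> N / 2" "N / 2 - g1 \<le> (32 * real d^2 * t^2 * N / U + a) / h + 4 ^ n * N * exp (- \<beta> * a)"
      using g1a g1b g1c unfolding N_def n_def by auto
    obtain g2 where g2a: "gibbs (spin_basis L d) (H_Heis (J0 t U) h L d) \<beta> (Mspin L d) = complex_of_real g2"
      and g2b: "g2 \<le> real (L^d) / 2"
      and g2c: "real (L^d) / 2 - g2 \<le> (2 * J0 t U * real d * real (L^d) + a) / h + 2 ^ (L^d) * real (L^d) * exp (- \<beta> * a)"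
      using heis_bound[OF L J h beta a, of d] by (elim exE conjE)
    have g2: "gibbs (spin_basis L d) (H_Heis (J0 t U) h L d) \<beta> (Mspin L d) = complex_of_real g2"
      "g2 \<le> N / 2" "N / 2 - g2 \<le> (2 * J0 t U * real d * N + a) / h + 2 ^ n * N * exp (- \<beta> * a)"
      using g2a g2b g2c unfolding N_def n_def by auto
    define K1 where "K1 = 32 * real d^2 * t^2 / U"
    define K2 where "K2 = 8 * real d * t^2 / U"
    define cc where "cc = (4 * t^2 / l0) * ((ln 4 + sqrt U) / U)"
    have b1: "N / 2 - g1 \<le> N * ((K1 + cc) / hm + exp (- sqrt U))"
      unfolding cc_def
      by (rule per_site[OF N_def n1 hm hh beta _ l0 U t bJ' a_def], use U in \<open>simp add: K1_def\<close>,
          use g1(3) in \<open>simp add: K1_def\<close>)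
    have "2 ^ n * N * exp (- \<beta> * a) \<le> 4 ^ n * N * exp (- \<beta> * a)"
      using N1 by (intro mult_right_mono, auto intro: power_mono)
    hence g2': "N / 2 - g2 \<le> (K2 * N + a) / h + 4 ^ n * N * exp (- \<beta> * a)"
      using g2(3) unfolding K2_def J0_def by (simp add: algebra_simps)
    have b2: "N / 2 - g2 \<le> N * ((K2 + cc) / hm + exp (- sqrt U))"
      unfolding cc_def
      by (rule per_site[OF N_def n1 hm hh beta _ l0 U t bJ' a_def g2'], use U in \<open>simp add: K2_def\<close>)
    have EU: "E U = (K1 + cc) / hm + exp (- sqrt U) + ((K2 + cc) / hm + exp (- sqrt U))"
      unfolding E_def K1_def K2_def cc_def c1_def c3_def using hm U l0 by (simp add: field_simps)
    have NE: "N * E U = N * ((K1 + cc) / hm + exp (- sqrt U)) + N * ((K2 + cc) / hm + exp (- sqrt U))"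
      unfolding EU by (simp add: distrib_left)
    have "g1 - g2 \<le> N * E U" "g2 - g1 \<le> N * E U" unfolding NE using b1 b2 g1(2) g2(2) by linarith+
    hence diff: "\<bar>g1 - g2\<bar> \<le> N * E U" by (simp add: abs_le_iff)
    have "m_Hub t \<beta> U h L d - m_Heis t \<beta> U h L d = complex_of_real ((g1 - g2) / N)"
      unfolding m_Hub_def m_Heis_def g1(1) g2(1) N_def n_def by (simp add: diff_divide_distrib)
    hence "cmod (m_Hub t \<beta> U h L d - m_Heis t \<beta> U h L d) = \<bar>(g1 - g2) / N\<bar>" by (simp only: norm_of_real)
    also have "\<dots> = \<bar>g1 - g2\<bar> / N" using N1 by simp
    also have "\<dots> \<le> E U" using diff N1 by (simp add: divide_le_eq mult.commute)
    finally show ?thesis .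
  qed
  have lim: "((\<lambda>U. SUP \<beta>\<in>{\<beta>. \<beta> > 0 \<and> \<beta> * J0 t U \<ge> l0}. ereal (eps U \<beta>)) \<longlongrightarrow> 0) at_top"
  proof -
    have "((\<lambda>U. max 0 (E U)) \<longlongrightarrow> max 0 0) at_top"
      unfolding E_def by (intro tendsto_max tendsto_const lim_E)
    hence "((\<lambda>U. ereal (max 0 (E U))) \<longlongrightarrow> ereal 0) at_top" by (intro tendsto_ereal, simp)
    moreover have "eventually (\<lambda>U. ereal (max 0 (E U)) = (SUP \<beta>\<in>{\<beta>. \<beta> > 0 \<and> \<beta> * J0 t U \<ge> l0}. ereal (eps U \<beta>))) at_top"
    proof (rule eventually_at_top_linorderI[of 1])
      fix U :: real assume U1: "U \<ge> 1"
      have Jp: "J0 t U > 0" unfolding J0_def using U1 t by simp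
      have "l0 / J0 t U \<in> {\<beta>. \<beta> > 0 \<and> \<beta> * J0 t U \<ge> l0}" using Jp l0 by simp
      hence ne: "{\<beta>. \<beta> > 0 \<and> \<beta> * J0 t U \<ge> l0} \<noteq> {}" by blast
      show "ereal (max 0 (E U)) = (SUP \<beta>\<in>{\<beta>. \<beta> > 0 \<and> \<beta> * J0 t U \<ge> l0}. ereal (eps U \<beta>))"
        unfolding eps_def SUP_const[OF ne] by (rule refl)
    qed
    ultimately have "((\<lambda>U. SUP \<beta>\<in>{\<beta>. \<beta> > 0 \<and> \<beta> * J0 t U \<ge> l0}. ereal (eps U \<beta>)) \<longlongrightarrow> ereal 0) at_top"
      by (rule Lim_transform_eventually)
    thus ?thesis by (simp add: zero_ereal_def)
  qed
  show ?thesis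
  proof (intro exI[of _ 1] exI[of _ eps] conjI allI impI)
    show "\<And>U \<beta>. eps U \<beta> \<ge> 0" unfolding eps_def by simp
  next
    fix U \<beta> h and L :: nat
    assume "U \<ge> 1" "\<beta> > 0" "\<beta> * J0 t U \<ge> l0" "even L" "L > 0" "h \<in> I"
    thus "cmod (m_Hub t \<beta> U h L d - m_Heis t \<beta> U h L d) \<le> eps U \<beta>"
      using main[of U \<beta> L h] unfolding eps_def by simp
  next
    show "((\<lambda>U. SUP \<beta>\<in>{\<beta>. \<beta> > 0 \<and> \<beta> * J0 t U \<ge> l0}. ereal (eps U \<beta>)) \<longlongrightarrow> 0) at_top" by (rule lim)
  qed
qed

end
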